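(* Let $n\ge 2$ and $r\ge1$ an integer. (i) There exist $A,B\in\mathrm{SGL}_n(\mathbb{F}_2)$ and linearly independent $\mathbf{x}_1,\ldots,\mathbf{x}_r\in\mathbb{F}_2^n$ with $B-A=\sum_{i=1}^r\mathbf{x}_i\mathbf{x}_i^{\top}$ and $\mathbf{x}_i^{\top}A^{-1}\mathbf{x}_j=1$ for all $i,j$ if and only if $r$ is even and $r\le\lfloor\frac{n+1}{2}\rfloor$. (ii) There exist $A,B\in\mathrm{SGL}_n(\mathbb{F}_2)$ and linearly independent $\mathbf{x}_1,\ldots,\mathbf{x}_r$ with $B-A=\sum_{i=1}^r\mathbf{x}_i\mathbf{x}_i^{\top}$, $\mathbf{x}_i^{\top}A^{-1}\mathbf{x}_i=1$ for all $i$, and $\mathbf{x}_i^{\top}A^{-1}\mathbf{x}_j=0$ for some $i,j$, if and only if $r\in\{1,\ldots,n\}\setminus\{2\}$ is even. (iii) There exist $A,B\in\mathrm{SGL}_n(\mathbb{F}_2)$ and linearly independent $\mathbf{x}_1,\ldots,\mathbf{x}_r$ with $B-A=\sum_{i=1}^r\mathbf{x}_i\mathbf{x}_i^{\top}$ and $[\mathbf{x}_i^{\top}A^{-1}\mathbf{x}_j]_{i,j=1}^r$ of rank one and trace zero if and only if $r\in\{2,3,\ldots,\lfloor\frac{n+1}{2}\rfloor\}$. (iv) For each $r\in\{1,\ldots,n\}$ there exist $A,B\in\mathrm{SGL}_n(\mathbb{F}_2)$ and linearly independent $\mathbf{x}_1,\ldots,\mathbf{x}_r$ with $B-A=\sum_{i=1}^r\mathbf{x}_i\mathbf{x}_i^{\top}$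 such that it is neither the case that $\mathbf{x}_i^{\top}A^{-1}\mathbf{x}_i=1$ for all $i$, nor the case that $[\mathbf{x}_i^{\top}A^{-1}\mathbf{x}_j]_{i,j=1}^r$ has rank one and trace zero.
   Context: $\mathbb{F}_2$ is the binary field; $\mathrm{SGL}_n(\mathbb{F}_2)$ denotes the set of invertible symmetric $n\times n$ matrices over $\mathbb{F}_2$. *)

theory Defs
  imports "HOL-Library.Z2" "Jordan_Normal_Form.DL_Rank"
begin

text \<open>F_2 is the type bit (HOL-Library.Z2), a field. Matrices/vectors are JNF
  matrices/vectors with explicit dimensions.\<close>

definition SGL :: "nat \<Rightarrow> bit mat set" where
  "SGL n = {A \<in> carrier_mat n n. transpose_mat A = A \<and> invertible_mat A}"

definition minv :: "'a::field mat \<Rightarrow> 'a mat" where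
  "minv A = (THE B. B \<in> carrier_mat (dim_row A) (dim_row A) \<and> inverts_mat A B \<and> inverts_mat B A)"

definition sum_outer :: "nat \<Rightarrow> nat \<Rightarrow> (nat \<Rightarrow> 'a::comm_ring_1 vec) \<Rightarrow> 'a mat" where
  "sum_outer n r x = mat n n (\<lambda>(k, l). \<Sum>i<r. (x i $ k) * (x i $ l))"

definition lin_indep_family :: "nat \<Rightarrow> nat \<Rightarrow> (nat \<Rightarrow> bit vec) \<Rightarrow> bool" where
  "lin_indep_family n r x \<longleftrightarrow> (\<forall>i<r. x i \<in> carrier_vec n) \<and> inj_on x {..<r} \<and>
     module.lin_indpt class_ring (module_vec TYPE(bit) n) (x ` {..<r})"

definition gram :: "nat \<Rightarrow> bit mat \<Rightarrow> (nat \<Rightarrow> bit vec) \<Rightarrow> bit mat" where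
  "gram r A x = mat r r (\<lambda>(i, j). x i \<bullet> (minv A *\<^sub>v x j))"

definition mtrace :: "'a::comm_monoid_add mat \<Rightarrow> 'a" where
  "mtrace M = (\<Sum>i<dim_row M. M $$ (i, i))"

definition setting :: "nat \<Rightarrow> nat \<Rightarrow> bit mat \<Rightarrow> bit mat \<Rightarrow> (nat \<Rightarrow> bit vec) \<Rightarrow> bool" where
  "setting n r A B x \<longleftrightarrow> A \<in> SGL n \<and> B \<in> SGL n \<and> lin_indep_family n r x \<and>
     B - A = sum_outer n r x"

end

theory Submission
  imports Defs
begin

declare add_bit_eq_xor[simp del] mult_bit_eq_and[simp del]

lemma bit_cases2: "(a::bit) = 0 \<or> a = 1" by (cases a) auto
lemma bit_add_self[simp]: "(a::bit) + a = 0" by (cases a) auto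
lemma bit_mult_self[simp]: "(a::bit) * a = a" by (cases a) auto
lemma bit_neq0: "(a::bit) \<noteq> 0 \<longleftrightarrow> a = 1" by (cases a) auto
lemma bit_add_eq0: "(a::bit) + b = 0 \<longleftrightarrow> a = b"
  by (cases a; cases b) auto

definition indepF :: "nat \<Rightarrow> nat set \<Rightarrow> (nat \<Rightarrow> nat \<Rightarrow> bit) \<Rightarrow> bool" where
  "indepF d I f \<longleftrightarrow> (\<forall>c. (\<forall>j<d. (\<Sum>i\<in>I. c i * f i j) = 0) \<longrightarrow> (\<forall>i\<in>I. c i = 0))"

lemma indepF_0: assumes "indepF 0 I f" shows "I = {}"
proof -
  have "(\<forall>j<0. (\<Sum>i\<in>I. (\<lambda>_. 1::bit) i * f i j) = 0) \<longrightarrow> (\<forall>i\<in>I. (\<lambda>_. 1::bit) i = 0)"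
    using assms unfolding indepF_def by (rule spec)
  then have "\<forall>i\<in>I. (1::bit) = 0" by simp
  then show ?thesis by auto
qed

lemma elim_step:
  assumes IH0: "\<forall>I J f g. finite I \<longrightarrow> finite J \<longrightarrow> indepF d I f \<longrightarrow> indepF d J g \<longrightarrow>
      (\<forall>i\<in>I. \<forall>k\<in>J. (\<Sum>j<d. f i j * g k j) = 0) \<longrightarrow> card I + card J \<le> d"
  and fI: "finite I" and fJ: "finite J" and iI: "indepF (Suc d) I f" and iJ: "indepF (Suc d) J g"
  and orth: "\<forall>i\<in>I. \<forall>k\<in>J. (\<Sum>j<Suc d. f i j * g k j) = 0"
  and i0: "i0 \<in> I" and fi0: "f i0 d = 1"
  shows "card I + card J \<le> Suc d"
proof -
  define I' where "I' = I - {i0}"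
  define f' where "f' = (\<lambda>i j. f i j + f i d * f i0 j)"
  have fI': "finite I'" using fI I'_def by auto
  have sumI: "\<And>h. (\<Sum>i\<in>I. h i) = h i0 + (\<Sum>i\<in>I'. h i)"
    unfolding I'_def using fI i0 by (simp add: sum.remove)
  have ind1: "indepF d I' f'"
    unfolding indepF_def
  proof (intro allI impI)
    fix c assume h: "\<forall>j<d. (\<Sum>i\<in>I'. c i * f' i j) = 0"
    define c' where "c' = c(i0 := (\<Sum>i\<in>I'. c i * f i d))"
    have c'I': "\<And>i. i \<in> I' \<Longrightarrow> c' i = c i" unfolding c'_def I'_def by auto
    have "\<forall>j<Suc d. (\<Sum>i\<in>I. c' i * f i j) = 0"
    proof (intro allI impI)
      fix j assume j: "j < Suc d"
      have e1: "(\<Sum>i\<in>I'. c' i * f i j) = (\<Sum>i\<in>I'. c i * f i j)"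
        using c'I' by (intro sum.cong) auto
      have e: "(\<Sum>i\<in>I. c' i * f i j) = (\<Sum>i\<in>I'. c i * f i d) * f i0 j + (\<Sum>i\<in>I'. c i * f i j)"
        unfolding sumI e1 by (simp add: c'_def)
      show "(\<Sum>i\<in>I. c' i * f i j) = 0"
      proof (cases "j = d")
        case True then show ?thesis using e fi0 by simp
      next
        case False
        then have "j < d" using j by simp
        then have "(\<Sum>i\<in>I'. c i * f' i j) = 0" using h by simp
        moreover have "(\<Sum>i\<in>I'. c i * f' i j) = (\<Sum>i\<in>I'. c i * f i j) + (\<Sum>i\<in>I'. c i * f i d) * f i0 j"
          unfolding f'_def distrib_left sum.distrib sum_distrib_right by (simp add: mult.assoc)
        ultimately show ?thesis using e by (simp add: add.commute)
      qed
    qed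
    then have "\<forall>i\<in>I. c' i = 0" using iI unfolding indepF_def by blast
    then show "\<forall>i\<in>I'. c i = 0" using c'I' I'_def by auto
  qed
  have gd: "\<And>k. k \<in> J \<Longrightarrow> g k d = (\<Sum>j<d. f i0 j * g k j)"
  proof -
    fix k assume k: "k \<in> J"
    have "(\<Sum>j<Suc d. f i0 j * g k j) = 0" using orth i0 k by blast
    then have "(\<Sum>j<d. f i0 j * g k j) + g k d = 0" using fi0 by simp
    then show "g k d = (\<Sum>j<d. f i0 j * g k j)" by (simp add: bit_add_eq0)
  qed
  have ind2: "indepF d J g"
    unfolding indepF_def
  proof (intro allI impI)
    fix c assume h: "\<forall>j<d. (\<Sum>k\<in>J. c k * g k j) = 0"
    have "\<forall>j<Suc d. (\<Sum>k\<in>J. c k * g k j) = 0"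
    proof (intro allI impI)
      fix j assume j: "j < Suc d"
      show "(\<Sum>k\<in>J. c k * g k j) = 0"
      proof (cases "j = d")
        case True
        have "(\<Sum>k\<in>J. c k * g k d) = (\<Sum>k\<in>J. \<Sum>j<d. f i0 j * (c k * g k j))"
          using gd by (simp add: sum_distrib_left algebra_simps cong: sum.cong)
        also have "\<dots> = (\<Sum>j<d. f i0 j * (\<Sum>k\<in>J. c k * g k j))"
          by (subst sum.swap) (simp add: sum_distrib_left)
        also have "\<dots> = 0" using h by simp
        finally show ?thesis using True by simp
      next
        case False then show ?thesis using h j by simp
      qed
    qed
    then show "\<forall>k\<in>J. c k = 0" using iJ unfolding indepF_def by blast
  qed
  have orth': "\<forall>i\<in>I'. \<forall>k\<in>J. (\<Sum>j<d. f' i j * g k j) = 0"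
  proof (intro ballI)
    fix i k assume i: "i \<in> I'" and k: "k \<in> J"
    have iI: "i \<in> I" using i I'_def by auto
    have "(\<Sum>j<Suc d. f' i j * g k j) = (\<Sum>j<Suc d. f i j * g k j) + f i d * (\<Sum>j<Suc d. f i0 j * g k j)"
      unfolding f'_def by (simp add: algebra_simps sum.distrib sum_distrib_left)
    also have "\<dots> = 0" using orth iI k i0 by simp
    finally have "(\<Sum>j<Suc d. f' i j * g k j) = 0" .
    moreover have "f' i d = 0" unfolding f'_def using fi0 by simp
    ultimately show "(\<Sum>j<d. f' i j * g k j) = 0" by simp
  qed
  have h: "finite I' \<longrightarrow> finite J \<longrightarrow> indepF d I' f' \<longrightarrow> indepF d J g \<longrightarrow>
      (\<forall>i\<in>I'. \<forall>k\<in>J. (\<Sum>j<d. f' i j * g k j) = 0) \<longrightarrow> card I' + card J \<le> d"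
    by (rule IH0[THEN spec, THEN spec, THEN spec, THEN spec])
  have "card I' + card J \<le> d" using h fI' fJ ind1 ind2 orth' by blast
  moreover have "card I = Suc (card I')" unfolding I'_def by (rule card.remove[OF fI i0])
  ultimately show ?thesis by simp
qed

lemma elim_bound:
  "finite I \<Longrightarrow> finite J \<Longrightarrow> indepF d I f \<Longrightarrow> indepF d J g \<Longrightarrow>
      (\<forall>i\<in>I. \<forall>k\<in>J. (\<Sum>j<d. f i j * g k j) = 0) \<Longrightarrow> card I + card J \<le> d"
proof (induction d arbitrary: I J f g)
  case 0
  have "I = {}" by (rule indepF_0[OF 0(3)])
  moreover have "J = {}" by (rule indepF_0[OF 0(4)])
  ultimately show ?case by simp
next
  case (Suc d)
  have IH0: "\<forall>I J f g. finite I \<longrightarrow> finite J \<longrightarrow> indepF d I f \<longrightarrow> indepF d J g \<longrightarrow>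
      (\<forall>i\<in>I. \<forall>k\<in>J. (\<Sum>j<d. f i j * g k j) = 0) \<longrightarrow> card I + card J \<le> d"
    by (intro allI impI) (rule Suc.IH, assumption+)
  show ?case
  proof (cases "\<exists>i0\<in>I. f i0 d = 1")
    case True
    then obtain i0 where i0: "i0 \<in> I" "f i0 d = 1" by blast
    show ?thesis by (rule elim_step[OF IH0 Suc.prems(1-5) i0])
  next
    case F1: False
    show ?thesis
    proof (cases "\<exists>k0\<in>J. g k0 d = 1")
      case True
      then obtain k0 where k0: "k0 \<in> J" "g k0 d = 1" by blast
      have orth2: "\<forall>k\<in>J. \<forall>i\<in>I. (\<Sum>j<Suc d. g k j * f i j) = 0"
      proof (intro ballI)
        fix k i assume ki: "k \<in> J" "i \<in> I"
        have "(\<Sum>j<Suc d. f i j * g k j) = 0" using Suc.prems(5) ki by blast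
        then show "(\<Sum>j<Suc d. g k j * f i j) = 0" by (simp only: mult.commute)
      qed
      have "card J + card I \<le> Suc d"
        using elim_step[OF IH0 Suc.prems(2) Suc.prems(1) Suc.prems(4) Suc.prems(3) orth2 k0] .
      then show ?thesis by simp
    next
      case F2: False
      have f0: "f i d = 0" if "i \<in> I" for i
      proof -
        have "f i d \<noteq> 1" using F1 that by blast
        then show ?thesis by simp
      qed
      have g0: "g k d = 0" if "k \<in> J" for k
      proof -
        have "g k d \<noteq> 1" using F2 that by blast
        then show ?thesis by simp
      qed
      have i1: "indepF d I f" unfolding indepF_def
      proof (intro allI impI)
        fix c assume h: "\<forall>j<d. (\<Sum>i\<in>I. c i * f i j) = 0"
        have "\<forall>j<Suc d. (\<Sum>i\<in>I. c i * f i j) = 0"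
        proof (intro allI impI)
          fix j assume "j < Suc d"
          then consider "j < d" | "j = d" by linarith
          then show "(\<Sum>i\<in>I. c i * f i j) = 0"
          proof cases
            case 1 then show ?thesis using h by blast
          next
            case 2 then show ?thesis using f0 by simp
          qed
        qed
        then show "\<forall>i\<in>I. c i = 0" using Suc.prems(3) unfolding indepF_def by blast
      qed
      have i2: "indepF d J g" unfolding indepF_def
      proof (intro allI impI)
        fix c assume h: "\<forall>j<d. (\<Sum>i\<in>J. c i * g i j) = 0"
        have "\<forall>j<Suc d. (\<Sum>i\<in>J. c i * g i j) = 0"
        proof (intro allI impI)
          fix j assume "j < Suc d"
          then consider "j < d" | "j = d" by linarith
          then show "(\<Sum>i\<in>J. c i * g i j) = 0"
          proof cases
            case 1 then show ?thesis using h by blast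
          next
            case 2 then show ?thesis using g0 by simp
          qed
        qed
        then show "\<forall>i\<in>J. c i = 0" using Suc.prems(4) unfolding indepF_def by blast
      qed
      have o: "\<forall>i\<in>I. \<forall>k\<in>J. (\<Sum>j<d. f i j * g k j) = 0"
      proof (intro ballI)
        fix i k assume ik: "i \<in> I" "k \<in> J"
        have "(\<Sum>j<Suc d. f i j * g k j) = 0" using Suc.prems(5) ik by blast
        then show "(\<Sum>j<d. f i j * g k j) = 0" using f0[OF ik(1)] by simp
      qed
      have "card I + card J \<le> d" by (rule Suc.IH[OF Suc.prems(1,2) i1 i2 o])
      then show ?thesis by simp
    qed
  qed
qed

lemma mv_index: "M \<in> carrier_mat n m \<Longrightarrow> v \<in> carrier_vec m \<Longrightarrow> k < n \<Longrightarrow>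
   (M *\<^sub>v v) $ k = (\<Sum>l<m. M $$ (k,l) * v $ l)"
  by (auto simp: scalar_prod_def atLeast0LessThan intro!: sum.cong)

lemma dot_sum: "v \<in> carrier_vec n \<Longrightarrow> u \<bullet> v = (\<Sum>k<n. u $ k * v $ k)"
  by (simp add: scalar_prod_def atLeast0LessThan)

lemma inv_unique: assumes "(A::'a::comm_ring_1 mat) \<in> carrier_mat n n" "B \<in> carrier_mat n n" "C \<in> carrier_mat n n"
  "B * A = 1\<^sub>m n" "A * C = 1\<^sub>m n" shows "B = C"
proof -
  have "B = B * (A * C)" using assms(5) right_mult_one_mat[OF assms(2)] by simp
  also have "\<dots> = (B * A) * C" by (rule assoc_mult_mat[symmetric, OF assms(2,1,3)])
  also have "\<dots> = C" unfolding assms(4) using assms(3) by simp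
  finally show ?thesis .
qed

lemma invertible_carrier: assumes "invertible_mat A" "A \<in> carrier_mat n n"
  shows "\<exists>B\<in>carrier_mat n n. A * B = 1\<^sub>m n \<and> B * A = 1\<^sub>m n"
proof -
  obtain B where AB: "A * B = 1\<^sub>m (dim_row A)" and BA: "B * A = 1\<^sub>m (dim_row B)"
    using assms(1) unfolding invertible_mat_def inverts_mat_def by blast
  have c: "dim_col B = n" using arg_cong[OF AB, of dim_col] assms(2) by simp
  have r: "dim_row B = n" using arg_cong[OF BA, of dim_col] assms(2) by simp
  show ?thesis using AB BA c r assms(2) by (intro bexI[of _ B]) auto
qed

lemma minv_props: assumes "A \<in> carrier_mat n n" "invertible_mat (A::'a::field mat)"
  shows "minv A \<in> carrier_mat n n \<and> A * minv A = 1\<^sub>m n \<and> minv A * A = 1\<^sub>m n"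
proof -
  let ?P = "\<lambda>B. B \<in> carrier_mat (dim_row A) (dim_row A) \<and> inverts_mat A B \<and> inverts_mat B A"
  have dA: "dim_row A = n" using assms by auto
  have P: "?P B \<longleftrightarrow> B \<in> carrier_mat n n \<and> A * B = 1\<^sub>m n \<and> B * A = 1\<^sub>m n" for B
    unfolding inverts_mat_def dA by auto
  have ex: "\<exists>!B. ?P B"
  proof -
    obtain B where B: "B \<in> carrier_mat n n" "A * B = 1\<^sub>m n" "B * A = 1\<^sub>m n"
      using invertible_carrier[OF assms(2,1)] by blast
    show ?thesis
    proof (rule ex1I[of _ B])
      show "?P B" using B P by blast
      fix C assume "?P C"
      then have "C \<in> carrier_mat n n" "C * A = 1\<^sub>m n" using P by auto
      then show "C = B" using inv_unique[OF assms(1) _ B(1) _ B(2)] by blast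
    qed
  qed
  have "?P (minv A)" unfolding minv_def using theI'[OF ex] .
  then show ?thesis using P by blast
qed

lemma minv_sym: assumes "A \<in> carrier_mat n n" "invertible_mat (A::'a::field mat)" "transpose_mat A = A"
  shows "transpose_mat (minv A) = minv A"
proof -
  have m: "minv A \<in> carrier_mat n n" "A * minv A = 1\<^sub>m n" "minv A * A = 1\<^sub>m n"
    using minv_props[OF assms(1,2)] by auto
  have "transpose_mat (minv A) * A = transpose_mat (minv A) * transpose_mat A" using assms(3) by simp
  also have "\<dots> = transpose_mat (A * minv A)" using transpose_mult[OF assms(1) m(1)] by simp
  also have "\<dots> = 1\<^sub>m n" using m(2) by simp
  finally have "transpose_mat (minv A) * A = 1\<^sub>m n" .
  then show ?thesis using inv_unique[OF assms(1) _ m(1) _ m(2)] m(1) by simp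
qed

lemma invertible_one: "invertible_mat (1\<^sub>m n :: 'a::semiring_1 mat)"
  unfolding invertible_mat_def inverts_mat_def square_mat.simps
  by (intro conjI exI[of _ "1\<^sub>m n"]) auto

lemma minv_one: "minv (1\<^sub>m n :: 'a::field mat) = 1\<^sub>m n"
proof -
  have "1\<^sub>m n * minv (1\<^sub>m n) = (1\<^sub>m n :: 'a mat)"
    using minv_props[OF one_carrier_mat invertible_one] by blast
  moreover have "minv (1\<^sub>m n :: 'a mat) \<in> carrier_mat n n"
    using minv_props[OF one_carrier_mat invertible_one] by blast
  ultimately show ?thesis by simp
qed

lemma invertible_inj: assumes "invertible_mat B" "B \<in> carrier_mat n n" "w \<in> carrier_vec n"
  "B *\<^sub>v w = 0\<^sub>v n" shows "w = 0\<^sub>v n"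
proof -
  obtain C where C: "C \<in> carrier_mat n n" "C * B = 1\<^sub>m n"
    using invertible_carrier[OF assms(1,2)] by blast
  have "w = (C * B) *\<^sub>v w" unfolding C(2) using assms(3) by simp
  also have "\<dots> = C *\<^sub>v (B *\<^sub>v w)" by (rule assoc_mult_mat_vec[OF C(1) assms(2,3)])
  also have "\<dots> = 0\<^sub>v n" using assms(4) C(1)
    by (intro eq_vecI) (auto simp: scalar_prod_def)
  finally show ?thesis .
qed

lemma inj_invertible: assumes "(B :: 'a :: field mat) \<in> carrier_mat n n"
  "\<And>w. w \<in> carrier_vec n \<Longrightarrow> B *\<^sub>v w = 0\<^sub>v n \<Longrightarrow> w = 0\<^sub>v n"
  shows "invertible_mat B"
proof -
  have "det B \<noteq> 0" using det_0_iff_vec_prod_zero_field[OF assms(1)] assms(2) by blast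
  from det_non_zero_imp_unit[OF assms(1) this, of "()"]
  obtain C where C: "C \<in> carrier_mat n n" "C * B = 1\<^sub>m n" "B * C = 1\<^sub>m n"
    unfolding Units_def ring_mat_def by auto
  show ?thesis unfolding invertible_mat_def inverts_mat_def square_mat.simps
    using assms(1) C by (intro conjI exI[of _ C]) auto
qed

lemma lif_indepF: assumes "lin_indep_family n r x"
  shows "indepF n {..<r} (\<lambda>i j. x i $ j)"
  unfolding indepF_def
proof (intro allI impI ballI)
  fix c i0 assume h: "\<forall>j<n. (\<Sum>i\<in>{..<r}. c i * x i $ j) = 0" and i0: "i0 \<in> {..<r}"
  interpret vec_space "TYPE(bit)" n .
  have xc: "\<And>i. i < r \<Longrightarrow> x i \<in> carrier_vec n" and inj: "inj_on x {..<r}"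
    and li: "lin_indpt (x ` {..<r})" using assms unfolding lin_indep_family_def by auto
  show "c i0 = 0"
  proof (rule ccontr)
    assume c0: "c i0 \<noteq> 0"
    define A where "A = x ` {..<r}"
    define a where "a = (\<lambda>v. c (the_inv_into {..<r} x v))"
    have AC: "A \<subseteq> carrier_vec n" using xc A_def by auto
    have ax: "\<And>i. i < r \<Longrightarrow> a (x i) = c i" unfolding a_def using the_inv_into_f_f[OF inj] by auto
    have "lincomb a A = 0\<^sub>v n"
    proof (rule eq_vecI)
      show "dim_vec (lincomb a A) = dim_vec (0\<^sub>v n)"
        using lincomb_closed[OF AC] by (simp add: carrier_vecD)
      fix j assume "j < dim_vec (0\<^sub>v n)"
      then have j: "j < n" by simp
      have "lincomb a A $ j = (\<Sum>v\<in>A. a v * v $ j)" by (rule lincomb_index[OF j AC])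
      also have "\<dots> = (\<Sum>i\<in>{..<r}. a (x i) * x i $ j)" unfolding A_def
        by (rule sum.reindex[OF inj, unfolded comp_def])
      also have "\<dots> = (\<Sum>i\<in>{..<r}. c i * x i $ j)" using ax by (intro sum.cong) auto
      also have "\<dots> = 0" using h j by blast
      finally show "lincomb a A $ j = 0\<^sub>v n $ j" using j by simp
    qed
    moreover have "x i0 \<in> A" "a (x i0) \<noteq> 0" using i0 ax c0 A_def by auto
    ultimately have "lin_dep A"
      unfolding lin_dep_def using A_def by (intro exI[of _ A] exI[of _ a] exI[of _ "x i0"]) auto
    then show False using li A_def by simp
  qed
qed

lemma indepF_lif: assumes xc: "\<And>i. i < r \<Longrightarrow> x i \<in> carrier_vec n" and inj: "inj_on x {..<r}"
  and ind: "indepF n {..<r} (\<lambda>i j. x i $ j)"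
  shows "lin_indep_family n r x"
proof -
  interpret vec_space "TYPE(bit)" n .
  have "lin_indpt (x ` {..<r})"
  proof
    assume "lin_dep (x ` {..<r})"
    then obtain A a v where A: "finite A" "A \<subseteq> x ` {..<r}" "lincomb a A = 0\<^sub>v n" "v \<in> A" "a v \<noteq> 0"
      unfolding lin_dep_def by auto
    have AC: "A \<subseteq> carrier_vec n" using A(2) xc by auto
    define c where "c = (\<lambda>i. if x i \<in> A then a (x i) else 0)"
    define S where "S = {i\<in>{..<r}. x i \<in> A}"
    have xS: "x ` S = A" using A(2) S_def by auto
    have injS: "inj_on x S" using inj S_def by (auto intro: inj_on_subset)
    have "\<forall>j<n. (\<Sum>i\<in>{..<r}. c i * x i $ j) = 0"
    proof (intro allI impI)
      fix j assume j: "j < n"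
      have "(\<Sum>i\<in>{..<r}. c i * x i $ j) = (\<Sum>i\<in>{..<r}. if x i \<in> A then a (x i) * x i $ j else 0)"
        unfolding c_def by (intro sum.cong) auto
      also have "\<dots> = (\<Sum>i\<in>S. a (x i) * x i $ j)"
        unfolding S_def by (rule sum.inter_filter[symmetric]) simp
      also have "\<dots> = (\<Sum>w\<in>A. a w * w $ j)" unfolding xS[symmetric]
        by (rule sum.reindex[OF injS, unfolded comp_def, symmetric])
      also have "\<dots> = lincomb a A $ j" by (rule lincomb_index[OF j AC, symmetric])
      also have "\<dots> = 0" using A(3) j by simp
      finally show "(\<Sum>i\<in>{..<r}. c i * x i $ j) = 0" .
    qed
    then have c0: "\<forall>i\<in>{..<r}. c i = 0" using ind unfolding indepF_def by blast
    obtain i0 where i0: "i0 < r" "v = x i0" using A(2,4) by auto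
    have "c i0 = a v" using i0 A(4) c_def by simp
    then show False using c0 i0 A(5) by simp
  qed
  then show ?thesis unfolding lin_indep_family_def using xc inj by auto
qed

lemma sum3_swap: "(\<Sum>l<n. a l * (\<Sum>m<n. b l m * (\<Sum>j<r. c j * d j m))) =
  (\<Sum>j<r. c j * (\<Sum>l<n. a l * (\<Sum>m<n. b l m * d j m)))" for a :: "nat \<Rightarrow> 'a::comm_ring_1"
proof -
  have "(\<Sum>l<n. a l * (\<Sum>m<n. b l m * (\<Sum>j<r. c j * d j m))) =
     (\<Sum>l<n. \<Sum>m<n. \<Sum>j<r. c j * (a l * (b l m * d j m)))"
    by (simp add: sum_distrib_left mult_ac)
  also have "\<dots> = (\<Sum>l<n. \<Sum>j<r. \<Sum>m<n. c j * (a l * (b l m * d j m)))"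
    by (rule sum.cong[OF refl], rule sum.swap)
  also have "\<dots> = (\<Sum>j<r. \<Sum>l<n. \<Sum>m<n. c j * (a l * (b l m * d j m)))"
    by (rule sum.swap)
  also have "\<dots> = (\<Sum>j<r. c j * (\<Sum>l<n. a l * (\<Sum>m<n. b l m * d j m)))"
    by (simp add: sum_distrib_left mult_ac)
  finally show ?thesis .
qed

lemma bit_sub: "(b::bit) - a = s \<Longrightarrow> b = a + s"
  by (cases a; cases b; cases s) auto

lemma setting_basic: assumes "setting n r A B x"
  shows "A \<in> carrier_mat n n" "transpose_mat A = A" "invertible_mat A"
    "B \<in> carrier_mat n n" "invertible_mat B"
    "minv A \<in> carrier_mat n n" "A * minv A = 1\<^sub>m n" "minv A * A = 1\<^sub>m n"
    "transpose_mat (minv A) = minv A"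
    "\<And>i. i < r \<Longrightarrow> x i \<in> carrier_vec n"
    "indepF n {..<r} (\<lambda>i j. x i $ j)"
    "\<And>k l. k < n \<Longrightarrow> l < n \<Longrightarrow> B $$ (k,l) = A $$ (k,l) + (\<Sum>i<r. x i $ k * x i $ l)"
proof -
  have A: "A \<in> carrier_mat n n" "transpose_mat A = A" "invertible_mat A"
    and B: "B \<in> carrier_mat n n" "invertible_mat B"
    and li: "lin_indep_family n r x" and BA: "B - A = sum_outer n r x"
    using assms unfolding setting_def SGL_def by auto
  show "A \<in> carrier_mat n n" "transpose_mat A = A" "invertible_mat A"
    "B \<in> carrier_mat n n" "invertible_mat B" using A B by auto
  show "minv A \<in> carrier_mat n n" "A * minv A = 1\<^sub>m n" "minv A * A = 1\<^sub>m n"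
    using minv_props[OF A(1,3)] by auto
  show "transpose_mat (minv A) = minv A" by (rule minv_sym[OF A(1,3,2)])
  show "\<And>i. i < r \<Longrightarrow> x i \<in> carrier_vec n" using li unfolding lin_indep_family_def by auto
  show "indepF n {..<r} (\<lambda>i j. x i $ j)" by (rule lif_indepF[OF li])
  fix k l assume kl: "k < n" "l < n"
  have "(B - A) $$ (k,l) = sum_outer n r x $$ (k,l)" using BA by simp
  then have "B $$ (k,l) - A $$ (k,l) = (\<Sum>i<r. x i $ k * x i $ l)"
    using kl A(1) B(1) unfolding sum_outer_def by simp
  then show "B $$ (k,l) = A $$ (k,l) + (\<Sum>i<r. x i $ k * x i $ l)"
    by (rule bit_sub)
qed

lemma gram_formula: assumes "i < r" "j < r" "minv A \<in> carrier_mat n n" "x j \<in> carrier_vec n"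
  shows "gram r A x $$ (i,j) = (\<Sum>k<n. x i $ k * (\<Sum>l<n. minv A $$ (k,l) * x j $ l))"
proof -
  have "gram r A x $$ (i,j) = x i \<bullet> (minv A *\<^sub>v x j)" unfolding gram_def using assms by simp
  also have "\<dots> = (\<Sum>k<n. x i $ k * (minv A *\<^sub>v x j) $ k)"
    by (rule dot_sum) (use assms in auto)
  also have "\<dots> = (\<Sum>k<n. x i $ k * (\<Sum>l<n. minv A $$ (k,l) * x j $ l))"
    using mv_index[OF assms(3,4)] by simp
  finally show ?thesis .
qed

lemma mat_vec_zero: "C \<in> carrier_mat n m \<Longrightarrow> C *\<^sub>v 0\<^sub>v m = 0\<^sub>v n"
  by (intro eq_vecI) (auto simp: scalar_prod_def)

lemma IG_inj: assumes st: "setting n r A B x"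
  and c: "\<forall>i<r. c i + (\<Sum>j<r. gram r A x $$ (i,j) * c j) = 0"
  shows "\<forall>i<r. c i = 0"
proof -
  note b = setting_basic[OF st]
  define M where "M = minv A"
  have Mc: "M \<in> carrier_mat n n" using b(6) M_def by simp
  have AM: "A * M = 1\<^sub>m n" using b(7) M_def by simp
  define v where "v = vec n (\<lambda>k. \<Sum>j<r. c j * x j $ k)"
  have vc: "v \<in> carrier_vec n" by (simp add: v_def)
  define w where "w = M *\<^sub>v v"
  have wc: "w \<in> carrier_vec n" using Mc vc by (simp add: w_def)
  have Aw: "A *\<^sub>v w = v"
  proof -
    have "A *\<^sub>v w = (A * M) *\<^sub>v v" unfolding w_def by (rule assoc_mult_mat_vec[symmetric, OF b(1) Mc vc])
    also have "\<dots> = v" unfolding AM using vc by simp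
    finally show ?thesis .
  qed
  have wl: "(\<Sum>l<n. x i $ l * w $ l) = (\<Sum>j<r. gram r A x $$ (i,j) * c j)" if i: "i < r" for i
  proof -
    have "(\<Sum>l<n. x i $ l * w $ l) = (\<Sum>l<n. x i $ l * (\<Sum>m<n. M $$ (l,m) * (\<Sum>j<r. c j * x j $ m)))"
      unfolding w_def using mv_index[OF Mc vc] vc by (intro sum.cong) (auto simp: v_def)
    also have "\<dots> = (\<Sum>j<r. c j * (\<Sum>l<n. x i $ l * (\<Sum>m<n. M $$ (l,m) * x j $ m)))"
      by (rule sum3_swap)
    also have "\<dots> = (\<Sum>j<r. c j * gram r A x $$ (i,j))"
      using gram_formula[OF i _ b(6) b(10)] M_def by (intro sum.cong) auto
    finally show ?thesis by (simp add: mult.commute)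
  qed
  have Bw: "B *\<^sub>v w = 0\<^sub>v n"
  proof (rule eq_vecI)
    show "dim_vec (B *\<^sub>v w) = dim_vec (0\<^sub>v n)" using b(4) by simp
    fix k assume "k < dim_vec (0\<^sub>v n)"
    then have k: "k < n" by simp
    have "(B *\<^sub>v w) $ k = (\<Sum>l<n. B $$ (k,l) * w $ l)" by (rule mv_index[OF b(4) wc k])
    also have "\<dots> = (\<Sum>l<n. A $$ (k,l) * w $ l) + (\<Sum>l<n. (\<Sum>i<r. x i $ k * x i $ l) * w $ l)"
      using b(12)[OF k] by (simp add: distrib_right sum.distrib)
    also have "(\<Sum>l<n. A $$ (k,l) * w $ l) = v $ k"
      using mv_index[OF b(1) wc k] Aw by simp
    also have "(\<Sum>l<n. (\<Sum>i<r. x i $ k * x i $ l) * w $ l) = (\<Sum>i<r. x i $ k * (\<Sum>l<n. x i $ l * w $ l))"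
      by (simp add: sum_distrib_right sum_distrib_left mult.assoc sum.swap[of _ "{..<n}"])
    also have "\<dots> = (\<Sum>i<r. x i $ k * (\<Sum>j<r. gram r A x $$ (i,j) * c j))"
      using wl by (intro sum.cong) auto
    also have "v $ k = (\<Sum>i<r. x i $ k * c i)" unfolding v_def using k by (simp add: mult.commute)
    also have "(\<Sum>i<r. x i $ k * c i) + (\<Sum>i<r. x i $ k * (\<Sum>j<r. gram r A x $$ (i,j) * c j))
       = (\<Sum>i<r. x i $ k * (c i + (\<Sum>j<r. gram r A x $$ (i,j) * c j)))"
      by (simp add: sum.distrib distrib_left)
    also have "\<dots> = 0" using c by simp
    finally show "(B *\<^sub>v w) $ k = 0\<^sub>v n $ k" using k by simp
  qed
  have w0: "w = 0\<^sub>v n" by (rule invertible_inj[OF b(5) b(4) wc Bw])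
  have v0: "v = 0\<^sub>v n" using Aw w0 mat_vec_zero[OF b(1)] by simp
  have "\<forall>j<n. (\<Sum>i\<in>{..<r}. c i * x i $ j) = 0"
  proof (intro allI impI)
    fix j assume j: "j < n"
    have "v $ j = 0" using v0 j by simp
    then show "(\<Sum>i\<in>{..<r}. c i * x i $ j) = 0" unfolding v_def using j by simp
  qed
  then show ?thesis using b(11) unfolding indepF_def by blast
qed

lemma indepF_empty: "indepF d {} g" unfolding indepF_def by simp

lemma r_le_n: assumes st: "setting n r A B x" shows "r \<le> n"
proof -
  note b = setting_basic[OF st]
  have "card {..<r} + card ({}::nat set) \<le> n"
    by (rule elim_bound[OF _ _ b(11) indepF_empty]) auto
  then show ?thesis by simp
qed

lemma bound_rank1: assumes st: "setting n r A B x" and p: "p < r" and up: "u p = 1"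
  and G: "\<forall>i<r. \<forall>j<r. gram r A x $$ (i,j) = u i * u j"
  shows "2 * r \<le> n + 1"
proof -
  note b = setting_basic[OF st]
  define M where "M = minv A"
  have Mc: "M \<in> carrier_mat n n" using b(6) M_def by simp
  have AM: "A * M = 1\<^sub>m n" using b(7) M_def by simp
  define f where "f = (\<lambda>i j. \<Sum>l<n. M $$ (j,l) * x i $ l)"
  define g where "g = (\<lambda>k j. x k $ j + u k * x p $ j)"
  define J where "J = {..<r} - {p}"
  have Gf: "gram r A x $$ (k,i) = (\<Sum>j<n. x k $ j * f i j)" if "k < r" "i < r" for k i
    unfolding f_def M_def by (rule gram_formula[where i=k and j=i and x=x, OF that b(6) b(10)[OF that(2)]])
  have indf: "indepF n {..<r} f" unfolding indepF_def
  proof (intro allI impI)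
    fix c assume h: "\<forall>j<n. (\<Sum>i\<in>{..<r}. c i * f i j) = 0"
    define v where "v = vec n (\<lambda>l. \<Sum>i<r. c i * x i $ l)"
    have vc: "v \<in> carrier_vec n" by (simp add: v_def)
    have Mv: "M *\<^sub>v v = 0\<^sub>v n"
    proof (rule eq_vecI)
      show "dim_vec (M *\<^sub>v v) = dim_vec (0\<^sub>v n)" using Mc by simp
      fix j assume "j < dim_vec (0\<^sub>v n)"
      then have j: "j < n" by simp
      have "(M *\<^sub>v v) $ j = (\<Sum>l<n. M $$ (j,l) * (\<Sum>i<r. c i * x i $ l))"
        using mv_index[OF Mc vc j] by (simp add: v_def)
      also have "\<dots> = (\<Sum>i<r. c i * f i j)" unfolding f_def
        by (simp add: sum_distrib_left mult_ac sum.swap[of _ "{..<n}"])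
      also have "\<dots> = 0" using h j by simp
      finally show "(M *\<^sub>v v) $ j = 0\<^sub>v n $ j" using j by simp
    qed
    have "v = (A * M) *\<^sub>v v" unfolding AM using vc by simp
    also have "\<dots> = A *\<^sub>v (M *\<^sub>v v)" by (rule assoc_mult_mat_vec[OF b(1) Mc vc])
    also have "\<dots> = 0\<^sub>v n" unfolding Mv by (rule mat_vec_zero[OF b(1)])
    finally have v0: "v = 0\<^sub>v n" .
    have "\<forall>j<n. (\<Sum>i\<in>{..<r}. c i * x i $ j) = 0"
    proof (intro allI impI)
      fix j assume j: "j < n"
      have "v $ j = 0" using v0 j by simp
      then show "(\<Sum>i\<in>{..<r}. c i * x i $ j) = 0" unfolding v_def using j by simp
    qed
    then show "\<forall>i\<in>{..<r}. c i = 0" using b(11) unfolding indepF_def by blast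
  qed
  have sumr: "\<And>h. (\<Sum>i<r. h i) = h p + (\<Sum>i\<in>J. h i)"
    unfolding J_def using p by (simp add: sum.remove)
  have indg: "indepF n J g" unfolding indepF_def
  proof (intro allI impI)
    fix c assume h: "\<forall>j<n. (\<Sum>k\<in>J. c k * g k j) = 0"
    define c' where "c' = c(p := (\<Sum>k\<in>J. c k * u k))"
    have "\<forall>j<n. (\<Sum>i\<in>{..<r}. c' i * x i $ j) = 0"
    proof (intro allI impI)
      fix j assume j: "j < n"
      have e1: "(\<Sum>i\<in>J. c' i * x i $ j) = (\<Sum>i\<in>J. c i * x i $ j)"
        unfolding c'_def J_def by (intro sum.cong) auto
      have "(\<Sum>i\<in>{..<r}. c' i * x i $ j) = (\<Sum>k\<in>J. c k * u k) * x p $ j + (\<Sum>i\<in>J. c i * x i $ j)"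
        using sumr[of "\<lambda>i. c' i * x i $ j"] e1 by (simp add: c'_def)
      also have "\<dots> = (\<Sum>k\<in>J. c k * g k j)"
        unfolding g_def by (simp add: distrib_left sum.distrib sum_distrib_right mult.assoc add.commute)
      also have "\<dots> = 0" using h j by blast
      finally show "(\<Sum>i\<in>{..<r}. c' i * x i $ j) = 0" .
    qed
    then have "\<forall>i\<in>{..<r}. c' i = 0" using b(11) unfolding indepF_def by blast
    then have h2: "\<And>k. k \<in> J \<Longrightarrow> c' k = 0" unfolding J_def by auto
    show "\<forall>k\<in>J. c k = 0"
    proof
      fix k assume k: "k \<in> J"
      then have "k \<noteq> p" unfolding J_def by auto
      then have "c' k = c k" unfolding c'_def by simp
      then show "c k = 0" using h2[OF k] by simp
    qed
  qed
  have orth: "\<forall>i\<in>{..<r}. \<forall>k\<in>J. (\<Sum>j<n. f i j * g k j) = 0"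
  proof (intro ballI)
    fix i k assume i: "i \<in> {..<r}" and k: "k \<in> J"
    have ir: "i < r" and kr: "k < r" using i k J_def by auto
    have "(\<Sum>j<n. f i j * g k j) = (\<Sum>j<n. x k $ j * f i j) + u k * (\<Sum>j<n. x p $ j * f i j)"
      unfolding g_def by (simp add: distrib_left sum.distrib sum_distrib_left mult_ac)
    also have "\<dots> = u k * u i + u k * (u p * u i)"
      using Gf[OF kr ir] Gf[OF p ir] G kr ir p by simp
    also have "\<dots> = 0" using up by simp
    finally show "(\<Sum>j<n. f i j * g k j) = 0" .
  qed
  have "card {..<r} + card J \<le> n" by (rule elim_bound[OF _ _ indf indg orth]) (auto simp: J_def)
  moreover have "card J = r - 1" unfolding J_def using p by simp
  ultimately show ?thesis using p by simp
qed

lemma alt_det0: fixes K :: "bit mat"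
  assumes Kc: "K \<in> carrier_mat r r" and odd: "odd r" and d0: "\<forall>i<r. K $$ (i,i) = 0"
    and sym: "\<forall>i<r. \<forall>j<r. K $$ (i,j) = K $$ (j,i)"
  shows "det K = 0"
proof -
  define L :: "int mat" where "L = mat r r (\<lambda>(i,j). if i < j then (if K $$ (i,j) = 1 then 1 else 0)
     else if j < i then (if K $$ (j,i) = 1 then -1 else 0) else 0)"
  have Lc: "L \<in> carrier_mat r r" unfolding L_def by simp
  have tr: "transpose_mat L = (-1) \<cdot>\<^sub>m L"
    by (rule eq_matI) (auto simp: L_def)
  have "det L = det (transpose_mat L)" by (rule det_transpose[symmetric, OF Lc])
  also have "\<dots> = (-1) ^ r * det L" unfolding tr using Lc by simp
  also have "\<dots> = - det L" using odd by simp
  finally have L0: "det L = 0" by simp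
  have mK: "map_mat of_int L = K"
  proof (rule eq_matI)
    show "dim_row (map_mat of_int L) = dim_row K" "dim_col (map_mat of_int L) = dim_col K"
      using Kc Lc by auto
    fix i j assume "i < dim_row K" "j < dim_col K"
    then have ij: "i < r" "j < r" using Kc by auto
    consider "i < j" | "j < i" | "i = j" by linarith
    then show "map_mat of_int L $$ (i,j) = K $$ (i,j)"
    proof cases
      case 1 then show ?thesis using ij Lc by (cases "K $$ (i,j)") (auto simp: L_def)
    next
      case 2 then show ?thesis using ij Lc sym by (cases "K $$ (j,i)") (auto simp: L_def)
    next
      case 3 then show ?thesis using ij Lc d0 by (auto simp: L_def)
    qed
  qed
  have "det K = det (map_mat of_int L)" using mK by simp
  also have "\<dots> = of_int (det L)" by (rule of_int_hom.hom_det)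
  finally show ?thesis using L0 by simp
qed

lemma col_in_cols: "j < dim_col A \<Longrightarrow> col A j \<in> set (cols A)"
  by (metis cols_length cols_nth nth_mem)

lemma lin_indpt_two: fixes c1 c2 :: "bit vec"
  assumes c: "c1 \<in> carrier_vec r" "c2 \<in> carrier_vec r" "c1 \<noteq> 0\<^sub>v r" "c2 \<noteq> 0\<^sub>v r"
  shows "module.lin_indpt class_ring (module_vec TYPE(bit) r) {c1, c2}"
proof
  interpret vec_space "TYPE(bit)" r .
  assume "lin_dep {c1, c2}"
  then obtain A a v where A: "finite A" "A \<subseteq> {c1,c2}" "lincomb a A = 0\<^sub>v r" "v \<in> A" "a v \<noteq> 0"
    unfolding lin_dep_def by auto
  have AC: "A \<subseteq> carrier_vec r" using A(2) c by auto
  define a' where "a' = (\<lambda>w. if w \<in> A then a w else 0)"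
  have comp: "(\<Sum>w\<in>{c1,c2}. a' w * w $ k) = 0" if k: "k < r" for k
  proof -
    have "(\<Sum>w\<in>{c1,c2}. a' w * w $ k) = (\<Sum>w\<in>A. a w * w $ k)"
      unfolding a'_def using A(2) by (intro sum.mono_neutral_cong_right) auto
    also have "\<dots> = lincomb a A $ k" by (rule lincomb_index[OF k AC, symmetric])
    also have "\<dots> = 0" using A(3) k by simp
    finally show ?thesis .
  qed
  have nz: "a' v \<noteq> 0" "v \<in> {c1,c2}" using A(2,4,5) a'_def by auto
  show False
  proof (cases "c1 = c2")
    case True
    then have "\<forall>k<r. a' c1 * c1 $ k = 0" using comp by simp
    moreover have "a' c1 = 1" using nz True by auto
    ultimately have "c1 = 0\<^sub>v r" using c(1) by (intro eq_vecI) auto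
    then show False using c(3) by simp
  next
    case False
    then have e: "\<forall>k<r. a' c1 * c1 $ k + a' c2 * c2 $ k = 0" using comp by simp
    consider "a' c1 = 1" "a' c2 = 1" | "a' c1 = 1" "a' c2 = 0" | "a' c1 = 0" "a' c2 = 1"
      using nz by (cases "a' c1"; cases "a' c2") auto
    then show False
    proof cases
      case 1
      then have "c1 = c2" using e c(1,2) by (intro eq_vecI) (auto simp: bit_add_eq0)
      then show False using False by simp
    next
      case 2
      then have "c1 = 0\<^sub>v r" using e c(1) by (intro eq_vecI) auto
      then show False using c(3) by simp
    next
      case 3
      then have "c2 = 0\<^sub>v r" using e c(2) by (intro eq_vecI) auto
      then show False using c(4) by simp
    qed
  qed
qed

lemma rank_ge_two_cols: fixes G :: "bit mat"
  assumes Gc: "G \<in> carrier_mat r r" and ij: "i < r" "j < r"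
    and nz: "col G i \<noteq> 0\<^sub>v r" "col G j \<noteq> 0\<^sub>v r"
  shows "card {col G i, col G j} \<le> vec_space.rank r G"
proof -
  interpret vec_space "TYPE(bit)" r .
  show ?thesis
    by (rule rank_ge_card_indpt[OF Gc _ lin_indpt_two])
      (use Gc ij nz in \<open>auto intro: col_in_cols\<close>)
qed

lemma rank1_struct: fixes G :: "bit mat"
  assumes Gc: "G \<in> carrier_mat r r" and sym: "\<forall>i<r. \<forall>j<r. G $$ (i,j) = G $$ (j,i)"
    and rk: "vec_space.rank r G = 1"
  shows "\<forall>i<r. \<forall>j<r. G $$ (i,j) = G $$ (i,i) * G $$ (j,j)" "\<exists>p<r. G $$ (p,p) = 1"
proof -
  have colz: "col G j = 0\<^sub>v r \<longleftrightarrow> (\<forall>i<r. G $$ (i,j) = 0)" if "j < r" for j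
  proof
    assume h: "col G j = 0\<^sub>v r"
    show "\<forall>i<r. G $$ (i,j) = 0"
    proof (intro allI impI)
      fix i assume i: "i < r"
      have "col G j $ i = G $$ (i,j)" using Gc i that by simp
      then show "G $$ (i,j) = 0" using h i by simp
    qed
  next
    assume h: "\<forall>i<r. G $$ (i,j) = 0"
    show "col G j = 0\<^sub>v r" using Gc h that by (intro eq_vecI) auto
  qed
  have same: "col G i = col G j" if "i < r" "j < r" "col G i \<noteq> 0\<^sub>v r" "col G j \<noteq> 0\<^sub>v r" for i j
  proof (rule ccontr)
    assume ne: "col G i \<noteq> col G j"
    have "card {col G i, col G j} \<le> 1" using rank_ge_two_cols[OF Gc that] rk by simp
    then show False using ne by simp
  qed
  have not0: "\<exists>i<r. \<exists>j<r. G $$ (i,j) \<noteq> 0"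
  proof (rule ccontr)
    assume "\<not> ?thesis"
    then have "G = 0\<^sub>m r r" using Gc by (intro eq_matI) auto
    moreover have "vec_space.rank r (0\<^sub>m r r :: bit mat) = 0" by (rule vec_space.rank_0I)
    ultimately have "vec_space.rank r G = 0" by simp
    then show False using rk by simp
  qed
  show fml: "\<forall>i<r. \<forall>j<r. G $$ (i,j) = G $$ (i,i) * G $$ (j,j)"
  proof (intro allI impI)
    fix i j assume ij: "i < r" "j < r"
    show "G $$ (i,j) = G $$ (i,i) * G $$ (j,j)"
    proof (cases "col G j = 0\<^sub>v r")
      case True
      then have "G $$ (i,j) = 0" "G $$ (j,j) = 0" using colz ij by auto
      then show ?thesis by simp
    next
      case cj: False
      show ?thesis
      proof (cases "col G i = 0\<^sub>v r")
        case True
        then have "G $$ (j,i) = 0" "G $$ (i,i) = 0" using colz ij by auto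
        then show ?thesis using sym ij by simp
      next
        case ci: False
        have e: "col G i = col G j" by (rule same[OF ij ci cj])
        have "G $$ (i,j) = G $$ (i,i)" using arg_cong[OF e, of "\<lambda>v. v $ i"] Gc ij by simp
        moreover have "G $$ (j,j) = G $$ (j,i)" using arg_cong[OF e, of "\<lambda>v. v $ j"] Gc ij by simp
        moreover have "G $$ (j,i) = G $$ (i,j)" using sym ij by simp
        ultimately show ?thesis by simp
      qed
    qed
  qed
  show "\<exists>p<r. G $$ (p,p) = 1"
  proof (rule ccontr)
    assume "\<not> ?thesis"
    then have "\<forall>p<r. G $$ (p,p) = 0" by auto
    then have "\<forall>i<r. \<forall>j<r. G $$ (i,j) = 0"
    proof (intro allI impI)
      fix i j assume h0: "\<forall>p<r. G $$ (p,p) = 0" and ij: "i < r" "j < r"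
      have "G $$ (i,j) = G $$ (i,i) * G $$ (j,j)" using fml ij by blast
      then show "G $$ (i,j) = 0" using h0 ij by simp
    qed
    then show False using not0 by blast
  qed
qed

lemma rank_eq1: fixes G :: "bit mat"
  assumes Gc: "G \<in> carrier_mat r r" and u: "\<forall>i<r. \<forall>j<r. G $$ (i,j) = u i * u j"
    and p: "p < r" "u p = 1"
  shows "vec_space.rank r G = 1"
proof -
  interpret vec_space "TYPE(bit)" r .
  have le: "rank G \<le> 1"
    by (rule rank_le_1_product_entries[OF Gc, of u u]) (use Gc u in auto)
  have nz: "col G p \<noteq> 0\<^sub>v r"
  proof
    assume "col G p = 0\<^sub>v r"
    then have "col G p $ p = 0" using p by simp
    then show False using Gc u p by simp
  qed
  have "card {col G p, col G p} \<le> rank G" by (rule rank_ge_two_cols[OF Gc p(1) p(1) nz nz])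
  then show ?thesis using le by simp
qed

definition ind :: "nat \<Rightarrow> nat set \<Rightarrow> bit vec" where
  "ind n S = vec n (\<lambda>k. of_bool (k \<in> S))"

definition Wf :: "nat \<Rightarrow> (nat \<Rightarrow> nat set) \<Rightarrow> (nat \<Rightarrow> bit) \<Rightarrow> nat \<Rightarrow> bit" where
  "Wf r S c k = (\<Sum>j<r. if k \<in> S j then c j else 0)"

lemma of_nat_bit: "(of_nat k :: bit) = (if even k then 0 else 1)"
  by (induction k) auto

lemma ind_carrier[simp]: "ind n S \<in> carrier_vec n" unfolding ind_def by simp

lemma ind_index[simp]: "k < n \<Longrightarrow> ind n S $ k = of_bool (k \<in> S)" unfolding ind_def by simp

lemma ind_sum: "k < n \<Longrightarrow> (\<Sum>i<r. c i * ind n (S i) $ k) = Wf r S c k"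
  unfolding Wf_def by (intro sum.cong) auto

lemma Wf_set: "Wf r S c k = (\<Sum>j\<in>{j. j < r \<and> k \<in> S j}. c j)"
proof -
  have "Wf r S c k = (\<Sum>j\<in>{..<r}. if k \<in> S j then c j else 0)" unfolding Wf_def by simp
  also have "\<dots> = (\<Sum>j\<in>{j\<in>{..<r}. k \<in> S j}. c j)" by (rule sum.inter_filter[symmetric]) simp
  also have "{j\<in>{..<r}. k \<in> S j} = {j. j < r \<and> k \<in> S j}" by auto
  finally show ?thesis .
qed

lemma ind_dot: assumes "S \<subseteq> {..<n}" "T \<subseteq> {..<n}"
  shows "ind n S \<bullet> ind n T = of_nat (card (S \<inter> T))"
proof -
  have "ind n S \<bullet> ind n T = (\<Sum>k<n. of_bool (k \<in> S) * of_bool (k \<in> T))"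
    by (subst dot_sum[of _ n]) auto
  also have "\<dots> = (\<Sum>k<n. of_bool (k \<in> S \<and> k \<in> T))" by (intro sum.cong) auto
  also have "\<dots> = of_nat (card ({..<n} \<inter> {k. k \<in> S \<and> k \<in> T}))" by simp
  also have "{..<n} \<inter> {k. k \<in> S \<and> k \<in> T} = S \<inter> T" using assms by auto
  finally show ?thesis .
qed

lemma swap2: "(\<Sum>j<r. (\<Sum>k<n. a k * b j k) * c j) = (\<Sum>k<n. a k * (\<Sum>j<r. b j k * c j))"
  for a :: "nat \<Rightarrow> 'a::comm_ring_1"
  by (simp add: sum_distrib_right sum_distrib_left mult.assoc sum.swap[of _ "{..<n}"])

lemma ind_G: assumes S: "\<forall>j<r. S j \<subseteq> {..<n}" and i: "i < r"
  shows "(\<Sum>j<r. (ind n (S i) \<bullet> ind n (S j)) * c j) = (\<Sum>k\<in>S i. Wf r S c k)"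
proof -
  have "(\<Sum>j<r. (ind n (S i) \<bullet> ind n (S j)) * c j) =
        (\<Sum>j<r. (\<Sum>k<n. of_bool (k \<in> S i) * of_bool (k \<in> S j)) * c j)"
    by (intro sum.cong refl, subst dot_sum[of _ n]) auto
  also have "\<dots> = (\<Sum>k<n. of_bool (k \<in> S i) * (\<Sum>j<r. of_bool (k \<in> S j) * c j))"
    by (rule swap2)
  also have "\<dots> = (\<Sum>k<n. of_bool (k \<in> S i) * (\<Sum>j<r. if k \<in> S j then c j else 0))"
  proof -
    have eq: "\<And>k j. of_bool (k \<in> S j) * c j = (if k \<in> S j then c j else 0)" by simp
    show ?thesis by (simp only: eq)
  qed
  also have "\<dots> = (\<Sum>k\<in>{..<n}. if k \<in> S i then Wf r S c k else 0)"
    unfolding Wf_def by (intro sum.cong) auto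
  also have "\<dots> = (\<Sum>k\<in>{k\<in>{..<n}. k \<in> S i}. Wf r S c k)" by (rule sum.inter_filter[symmetric]) simp
  also have "{k\<in>{..<n}. k \<in> S i} = S i" using S i by auto
  finally show ?thesis .
qed

lemma indepF_inj: assumes "indepF n {..<r} (\<lambda>i j. x i $ j)"
  shows "inj_on x {..<r}"
proof (rule inj_onI)
  fix a b assume ab: "a \<in> {..<r}" "b \<in> {..<r}" "x a = x b"
  show "a = b"
  proof (rule ccontr)
    assume ne: "a \<noteq> b"
    define c where "c = (\<lambda>i. of_bool (i = a \<or> i = b) :: bit)"
    have "\<forall>j<n. (\<Sum>i\<in>{..<r}. c i * x i $ j) = 0"
    proof (intro allI impI)
      fix j
      have "(\<Sum>i\<in>{..<r}. c i * x i $ j) = (\<Sum>i\<in>{a,b}. x i $ j)"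
        unfolding c_def using ab(1,2) by (intro sum.mono_neutral_cong_right) auto
      also have "\<dots> = 0" using ne ab(3) by simp
      finally show "(\<Sum>i\<in>{..<r}. c i * x i $ j) = 0" .
    qed
    then have "c a = 0" using assms ab(1) unfolding indepF_def by blast
    then show False unfolding c_def by simp
  qed
qed

lemma construct: assumes xc: "\<And>i. i < r \<Longrightarrow> x i \<in> carrier_vec n"
  and ind: "indepF n {..<r} (\<lambda>i j. x i $ j)"
  and IG: "\<And>c. \<forall>i<r. c i + (\<Sum>j<r. (x i \<bullet> x j) * c j) = 0 \<Longrightarrow> \<forall>i<r. c i = 0"
  shows "setting n r (1\<^sub>m n) (1\<^sub>m n + sum_outer n r x) x"
    "gram r (1\<^sub>m n) x = mat r r (\<lambda>(i,j). x i \<bullet> x j)"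
proof -
  define S where "S = sum_outer n r x"
  define B where "B = 1\<^sub>m n + S"
  have Sc: "S \<in> carrier_mat n n" unfolding S_def sum_outer_def by simp
  have Bc: "B \<in> carrier_mat n n" unfolding B_def using Sc by simp
  have Sidx: "S $$ (k,l) = (\<Sum>i<r. x i $ k * x i $ l)" if "k < n" "l < n" for k l
    unfolding S_def sum_outer_def using that by simp
  have A1: "1\<^sub>m n \<in> SGL n" unfolding SGL_def using invertible_one by simp
  have Bt: "transpose_mat B = B"
  proof (rule eq_matI)
    fix k l assume "k < dim_row B" "l < dim_col B"
    then have kl: "k < n" "l < n" using Bc by auto
    show "transpose_mat B $$ (k,l) = B $$ (k,l)"
      using kl Bc Sc Sidx by (simp add: B_def mult.commute)
  qed (use Bc in auto)
  have Binv: "invertible_mat B"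
  proof (rule inj_invertible[OF Bc])
    fix w assume wc: "w \<in> carrier_vec n" and Bw: "B *\<^sub>v w = 0\<^sub>v n"
    define c where "c = (\<lambda>i. x i \<bullet> w)"
    have wk: "w $ k = (\<Sum>i<r. c i * x i $ k)" if k: "k < n" for k
    proof -
      have "(B *\<^sub>v w) $ k = (\<Sum>l<n. B $$ (k,l) * w $ l)" by (rule mv_index[OF Bc wc k])
      also have "\<dots> = (\<Sum>l<n. (of_bool (k = l) + (\<Sum>i<r. x i $ k * x i $ l)) * w $ l)"
      proof (intro sum.cong refl)
        fix l assume "l \<in> {..<n}"
        then have l: "l < n" by simp
        have "B $$ (k,l) = 1\<^sub>m n $$ (k,l) + S $$ (k,l)" unfolding B_def using Sc k l by simp
        also have "\<dots> = of_bool (k = l) + (\<Sum>i<r. x i $ k * x i $ l)" using Sidx[OF k l] k l by simp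
        finally show "B $$ (k,l) * w $ l = (of_bool (k = l) + (\<Sum>i<r. x i $ k * x i $ l)) * w $ l" by simp
      qed
      also have "\<dots> = (\<Sum>l<n. of_bool (k = l) * w $ l) + (\<Sum>l<n. (\<Sum>i<r. x i $ k * x i $ l) * w $ l)"
        by (simp add: distrib_right sum.distrib)
      also have "(\<Sum>l<n. of_bool (k = l) * w $ l) = w $ k"
      proof -
        have "(\<Sum>l<n. of_bool (k = l) * w $ l) = (\<Sum>l<n. if l = k then w $ l else 0)"
          by (intro sum.cong) auto
        also have "\<dots> = w $ k" using k by (simp add: sum.delta)
        finally show ?thesis .
      qed
      also have "(\<Sum>l<n. (\<Sum>i<r. x i $ k * x i $ l) * w $ l) = (\<Sum>i<r. x i $ k * (\<Sum>l<n. x i $ l * w $ l))"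
        by (simp add: sum_distrib_right sum_distrib_left mult.assoc sum.swap[of _ "{..<n}"])
      also have "\<dots> = (\<Sum>i<r. c i * x i $ k)" unfolding c_def
        using dot_sum[OF wc] by (intro sum.cong) (auto simp: mult.commute)
      finally have "w $ k + (\<Sum>i<r. c i * x i $ k) = 0" using Bw k by simp
      then show ?thesis by (simp add: bit_add_eq0)
    qed
    have "\<forall>i<r. c i + (\<Sum>j<r. (x i \<bullet> x j) * c j) = 0"
    proof (intro allI impI)
      fix i assume i: "i < r"
      have "c i = (\<Sum>k<n. x i $ k * w $ k)" unfolding c_def by (rule dot_sum[OF wc])
      also have "\<dots> = (\<Sum>k<n. x i $ k * (\<Sum>j<r. c j * x j $ k))" using wk by (intro sum.cong) auto
      also have "\<dots> = (\<Sum>j<r. (\<Sum>k<n. x i $ k * x j $ k) * c j)"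
        by (simp add: sum_distrib_right sum_distrib_left mult_ac sum.swap[of _ "{..<n}"])
      also have "\<dots> = (\<Sum>j<r. (x i \<bullet> x j) * c j)" using dot_sum[OF xc] by (intro sum.cong) auto
      finally show "c i + (\<Sum>j<r. (x i \<bullet> x j) * c j) = 0" by simp
    qed
    then have c0: "\<forall>i<r. c i = 0" by (rule IG)
    show "w = 0\<^sub>v n" using wc wk c0 by (intro eq_vecI) auto
  qed
  have B1: "B \<in> SGL n" unfolding SGL_def using Bc Bt Binv by simp
  have li: "lin_indep_family n r x" by (rule indepF_lif[OF xc indepF_inj[OF ind] ind])
  have BA: "B - 1\<^sub>m n = S" using Bc Sc by (intro eq_matI) (auto simp: B_def)
  show "setting n r (1\<^sub>m n) (1\<^sub>m n + sum_outer n r x) x"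
    unfolding setting_def using A1 B1 li BA by (simp add: B_def S_def)
  show "gram r (1\<^sub>m n) x = mat r r (\<lambda>(i,j). x i \<bullet> x j)"
    unfolding gram_def minv_one using xc by (intro eq_matI) auto
qed

lemma constrA:
  assumes r1: "1 \<le> r" and rn: "2 * r \<le> n + 1" and u0: "u 0 = (1::bit)"
    and usum: "(\<Sum>i<r. u i) = 0"
  shows "\<exists>x. setting n r (1\<^sub>m n) (1\<^sub>m n + sum_outer n r x) x \<and>
           (\<forall>i<r. \<forall>j<r. gram r (1\<^sub>m n) x $$ (i,j) = u i * u j)"
proof -
  define Z where "Z = (\<lambda>i. if u i = 1 then {0::nat} else {})"
  define T where "T = (\<lambda>i::nat. if i = 0 then {} else {2*i-1, 2*i})"
  define S where "S = (\<lambda>i. Z i \<union> T i)"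
  define x where "x = (\<lambda>i. ind n (S i))"
  have Ssub: "\<forall>j<r. S j \<subseteq> {..<n}"
  proof (intro allI impI)
    fix j assume j: "j < r"
    have "2 * j < n" using j rn by linarith
    then show "S j \<subseteq> {..<n}" using r1 rn unfolding S_def Z_def T_def by auto
  qed
  have xc: "\<And>i. i < r \<Longrightarrow> x i \<in> carrier_vec n" unfolding x_def by simp
  have T0: "0 \<notin> T i" for i unfolding T_def by auto
  have TT: "T i \<inter> T j = (if i = j then T i else {})" for i j
    unfolding T_def by auto
  have cardT: "card (T i) = (if i = 0 then 0 else 2)" for i
    unfolding T_def by auto
  have dot: "x i \<bullet> x j = u i * u j" if ij: "i < r" "j < r" for i j
  proof -
    have "x i \<bullet> x j = of_nat (card (S i \<inter> S j))" unfolding x_def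
      using Ssub ij by (intro ind_dot) auto
    also have "S i \<inter> S j = (Z i \<inter> Z j) \<union> (T i \<inter> T j)"
      unfolding S_def using T0 by (auto simp: Z_def)
    also have "card \<dots> = card (Z i \<inter> Z j) + card (T i \<inter> T j)"
      by (rule card_Un_disjoint) (auto simp: Z_def T_def)
    also have "card (Z i \<inter> Z j) = (if u i = 1 \<and> u j = 1 then 1 else 0)" by (auto simp: Z_def)
    also have "card (T i \<inter> T j) = (if i = j \<and> i \<noteq> 0 then 2 else 0)" by (simp add: TT cardT)
    finally show ?thesis
      by (cases "u i"; cases "u j") (auto simp: of_nat_bit)
  qed
  have indep: "indepF n {..<r} (\<lambda>i j. x i $ j)" unfolding indepF_def
  proof (intro allI impI)
    fix c assume h: "\<forall>j<n. (\<Sum>i\<in>{..<r}. c i * x i $ j) = 0"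
    have W0: "Wf r S c k = 0" if "k < n" for k
      using h that ind_sum[where k=k and n=n and r=r and c=c and S=S] unfolding x_def by simp
    have ct: "c t = 0" if t: "1 \<le> t" "t < r" for t
    proof -
      have k: "2*t - 1 < n" using t rn by linarith
      have "{j. j < r \<and> 2*t - 1 \<in> S j} = {t}"
        using t unfolding S_def Z_def T_def by auto
      then have "Wf r S c (2*t - 1) = c t" unfolding Wf_set by simp
      then show ?thesis using W0[OF k] by simp
    qed
    have c0: "c 0 = 0"
    proof -
      have n0: "0 < n" using rn r1 by linarith
      have fin: "finite {j. j < r \<and> 0 \<in> S j}" by simp
      have in0: "0 \<in> {j. j < r \<and> 0 \<in> S j}" using r1 u0 unfolding S_def Z_def by auto
      have "Wf r S c 0 = c 0 + (\<Sum>j\<in>{j. j < r \<and> 0 \<in> S j} - {0}. c j)"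
        unfolding Wf_set using sum.remove[OF fin in0] by simp
      also have "(\<Sum>j\<in>{j. j < r \<and> 0 \<in> S j} - {0}. c j) = 0"
        using ct by (intro sum.neutral) auto
      finally show ?thesis using W0[OF n0] by simp
    qed
    show "\<forall>i\<in>{..<r}. c i = 0"
    proof
      fix i assume "i \<in> {..<r}"
      then have i: "i < r" by simp
      show "c i = 0"
      proof (cases "i = 0")
        case True then show ?thesis using c0 by simp
      next
        case False then show ?thesis using ct[of i] i by simp
      qed
    qed
  qed
  have IG: "\<forall>i<r. c i = 0" if h: "\<forall>i<r. c i + (\<Sum>j<r. (x i \<bullet> x j) * c j) = 0" for c
  proof -
    define t where "t = (\<Sum>j<r. u j * c j)"
    have ci: "c i = u i * t" if i: "i < r" for i
    proof -
      have "(\<Sum>j<r. (x i \<bullet> x j) * c j) = u i * t"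
        unfolding t_def sum_distrib_left using dot i by (intro sum.cong) (auto simp: mult.assoc)
      moreover have "c i + (\<Sum>j<r. (x i \<bullet> x j) * c j) = 0" using h i by blast
      ultimately have "c i + u i * t = 0" by simp
      then show ?thesis by (simp only: bit_add_eq0)
    qed
    have "t = (\<Sum>j<r. u j * c j)" by (simp add: t_def)
    also have "\<dots> = (\<Sum>j<r. u j * (u j * t))" using ci by (intro sum.cong) auto
    also have "\<dots> = (\<Sum>j<r. u j) * t" by (simp add: sum_distrib_right mult.assoc[symmetric])
    also have "\<dots> = 0" using usum by simp
    finally show ?thesis using ci by simp
  qed
  have st: "setting n r (1\<^sub>m n) (1\<^sub>m n + sum_outer n r x) x"
    and gr: "gram r (1\<^sub>m n) x = mat r r (\<lambda>(i,j). x i \<bullet> x j)"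
    using construct[OF xc indep IG] by auto
  show ?thesis using st gr dot by (intro exI[of _ x]) auto
qed

lemma constrC:
  assumes m1: "1 \<le> m" and s: "s = 2*m + (if od then 1 else 0)" and sn: "s \<le> n"
  shows "\<exists>x. setting n s (1\<^sub>m n) (1\<^sub>m n + sum_outer n s x) x \<and>
           gram s (1\<^sub>m n) x $$ (0,0) = 0 \<and> gram s (1\<^sub>m n) x $$ (0,m) = 1"
proof -
  define S where "S = (\<lambda>i. if i < m then {i, m+i} else if i = m \<and> od then {m, 2*m} else {i})"
  define x where "x = (\<lambda>i. ind n (S i))"
  have Ssub: "\<forall>j<s. S j \<subseteq> {..<n}"
  proof (intro allI impI)
    fix j assume j: "j < s"
    show "S j \<subseteq> {..<n}" using j s sn m1 unfolding S_def by (cases od) auto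
  qed
  have xc: "\<And>i. i < s \<Longrightarrow> x i \<in> carrier_vec n" unfolding x_def by simp
  have sk1: "{j. j < s \<and> k \<in> S j} = {k}" if "k < m" for k
    using that s m1 unfolding S_def by (cases od) auto
  have sk2: "{j. j < s \<and> k \<in> S j} = {k - m, k}" if "m \<le> k" "k < 2*m" for k
    using that s m1 unfolding S_def by (cases od) auto
  have sk3: "{j. j < s \<and> 2*m \<in> S j} = {m, 2*m}" if od
    using that s m1 unfolding S_def by auto
  have W1: "Wf s S c k = c k" if "k < m" for k c unfolding Wf_set sk1[OF that] by simp
  have W2: "Wf s S c k = c (k - m) + c k" if "m \<le> k" "k < 2*m" for k c
    unfolding Wf_set sk2[OF that] using that m1 by simp
  have W3: "Wf s S c (2*m) = c m + c (2*m)" if od for c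
    unfolding Wf_set sk3[OF that] using m1 by simp
  have cases_s: "i < m \<or> (m \<le> i \<and> i < 2*m) \<or> (od \<and> i = 2*m)" if "i < s" for i
    using that s by (cases od) auto
  have indep: "indepF n {..<s} (\<lambda>i j. x i $ j)" unfolding indepF_def
  proof (intro allI impI)
    fix c assume h: "\<forall>j<n. (\<Sum>i\<in>{..<s}. c i * x i $ j) = 0"
    have W0: "Wf s S c k = 0" if "k < n" for k
      using h that ind_sum[where k=k and n=n and r=s and c=c and S=S] unfolding x_def by simp
    have a: "c k = 0" if "k < m" for k using W0[of k] W1[OF that] that s sn by simp
    have b: "c k = 0" if "m \<le> k" "k < 2*m" for k
    proof -
      have "c (k - m) + c k = 0" using W0[of k] W2[OF that] that s sn by simp
      moreover have "c (k - m) = 0" using a[of "k - m"] that by simp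
      ultimately show ?thesis by simp
    qed
    have d: "c (2*m) = 0" if od
    proof -
      have "c m + c (2*m) = 0" using W0[of "2*m"] W3[OF that] that s sn by simp
      moreover have "c m = 0" using b[of m] m1 by simp
      ultimately show ?thesis by simp
    qed
    show "\<forall>i\<in>{..<s}. c i = 0" using a b d cases_s by auto
  qed
  have IG: "\<forall>i<s. c i = 0" if h: "\<forall>i<s. c i + (\<Sum>j<s. (x i \<bullet> x j) * c j) = 0" for c
  proof -
    have E: "c i + (\<Sum>k\<in>S i. Wf s S c k) = 0" if "i < s" for i
    proof -
      have e: "(\<Sum>j<s. (x i \<bullet> x j) * c j) = (\<Sum>k\<in>S i. Wf s S c k)"
        unfolding x_def by (rule ind_G[OF Ssub that])
      have "c i + (\<Sum>j<s. (x i \<bullet> x j) * c j) = 0" using h that by blast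
      then show ?thesis unfolding e .
    qed
    have Et: "c t + c (m+t) = 0" if "t < m" for t
    proof -
      have "S t = {t, m+t}" using that unfolding S_def by simp
      then have "(\<Sum>k\<in>S t. Wf s S c k) = c t + (c t + c (m+t))"
        using that W1[OF that] W2[of "m+t"] by simp
      then show ?thesis using E[of t] that s by simp
    qed
    have Emt: "c t = 0" if "t < m" "\<not> (t = 0 \<and> od)" for t
    proof -
      have "S (m+t) = {m+t}" using that unfolding S_def by auto
      then have "(\<Sum>k\<in>S (m+t). Wf s S c k) = c t + c (m+t)"
        using that W2[of "m+t"] by simp
      then have "c (m+t) + (c t + c (m+t)) = 0" using E[of "m+t"] that s by simp
      then show ?thesis by (simp add: add.assoc[symmetric])
    qed
    have E2m: "c m = 0" if od
    proof -
      have "S (2*m) = {2*m}" using m1 unfolding S_def by auto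
      then have "c (2*m) + (c m + c (2*m)) = 0" using E[of "2*m"] W3[OF that] that s by simp
      then show ?thesis by (simp add: add.commute add.left_commute)
    qed
    have Em: "c 0 + c m + c (2*m) = 0" if od
    proof -
      have "S m = {m, 2*m}" using that m1 unfolding S_def by simp
      then have "(\<Sum>k\<in>S m. Wf s S c k) = (c 0 + c m) + (c m + c (2*m))"
        using m1 W2[of m] W3[OF that] by simp
      then have "c m + ((c 0 + c m) + (c m + c (2*m))) = 0" using E[of m] that s m1 by simp
      moreover have "c m + ((c 0 + c m) + (c m + c (2*m))) = c 0 + c m + c (2*m)"
        by (simp add: ac_simps)
      ultimately show ?thesis by simp
    qed
    have ct: "c t = 0" if "t < m" for t
    proof (cases "t = 0 \<and> od")
      case True
      have "c 0 + c m = 0" using Et[of 0] m1 by simp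
      then show ?thesis using True E2m by (simp add: bit_add_eq0)
    next
      case False then show ?thesis using Emt that by simp
    qed
    have cmt: "c (m+t) = 0" if "t < m" for t using Et[OF that] ct[OF that] by simp
    have c2m: "c (2*m) = 0" if od using Em[OF that] ct[of 0] E2m[OF that] m1 by simp
    show ?thesis
    proof (intro allI impI)
      fix i assume i: "i < s"
      consider "i < m" | "m \<le> i" "i < 2*m" | "od" "i = 2*m" using cases_s[OF i] by blast
      then show "c i = 0"
      proof cases
        case 1 then show ?thesis using ct by simp
      next
        case 2 then show ?thesis using cmt[of "i - m"] by simp
      next
        case 3 then show ?thesis using c2m by simp
      qed
    qed
  qed
  have st: "setting n s (1\<^sub>m n) (1\<^sub>m n + sum_outer n s x) x"
    and gr: "gram s (1\<^sub>m n) x = mat s s (\<lambda>(i,j). x i \<bullet> x j)"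
    using construct[OF xc indep IG] by auto
  have ms: "0 < s" "m < s" using s m1 by auto
  have g00: "gram s (1\<^sub>m n) x $$ (0,0) = 0"
  proof -
    have "gram s (1\<^sub>m n) x $$ (0,0) = x 0 \<bullet> x 0" using gr ms by simp
    also have "\<dots> = of_nat (card (S 0 \<inter> S 0))" unfolding x_def
      using Ssub ms by (intro ind_dot) auto
    also have "S 0 \<inter> S 0 = {0, m}" using m1 unfolding S_def by auto
    finally show ?thesis using m1 by (simp add: of_nat_bit)
  qed
  have g0m: "gram s (1\<^sub>m n) x $$ (0,m) = 1"
  proof -
    have "gram s (1\<^sub>m n) x $$ (0,m) = x 0 \<bullet> x m" using gr ms by simp
    also have "\<dots> = of_nat (card (S 0 \<inter> S m))" unfolding x_def
      using Ssub ms by (intro ind_dot) auto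
    also have "S 0 \<inter> S m = {m}" using m1 unfolding S_def by auto
    finally show ?thesis by (simp add: of_nat_bit)
  qed
  show ?thesis using st g00 g0m by blast
qed

lemma constrD:
  assumes n2: "2 \<le> n"
  shows "\<exists>x. setting n 1 (1\<^sub>m n) (1\<^sub>m n + sum_outer n 1 x) x \<and>
           gram 1 (1\<^sub>m n) x = 0\<^sub>m 1 1"
proof -
  define S where "S = (\<lambda>i::nat. {0::nat, 1})"
  define x where "x = (\<lambda>i. ind n (S i))"
  have Ssub: "\<forall>j<1. S j \<subseteq> {..<n}" using n2 unfolding S_def by auto
  have xc: "\<And>i. i < 1 \<Longrightarrow> x i \<in> carrier_vec n" unfolding x_def by simp
  have dot: "x 0 \<bullet> x 0 = 0"
  proof -
    have "x 0 \<bullet> x 0 = of_nat (card (S 0 \<inter> S 0))" unfolding x_def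
      using Ssub by (intro ind_dot) auto
    then show ?thesis unfolding S_def by (simp add: of_nat_bit)
  qed
  have indep: "indepF n {..<1} (\<lambda>i j. x i $ j)" unfolding indepF_def
  proof (intro allI impI)
    fix c assume h: "\<forall>j<n. (\<Sum>i\<in>{..<1}. c i * x i $ j) = 0"
    have "c 0 * x 0 $ 0 = 0" using h n2 by simp
    moreover have "x 0 $ 0 = 1" unfolding x_def S_def using n2 by simp
    ultimately show "\<forall>i\<in>{..<1}. c i = 0" by simp
  qed
  have IG: "\<forall>i<1. c i = 0" if h: "\<forall>i<1. c i + (\<Sum>j<1. (x i \<bullet> x j) * c j) = 0" for c
    using h dot by simp
  have st: "setting n 1 (1\<^sub>m n) (1\<^sub>m n + sum_outer n 1 x) x"
    and gr: "gram 1 (1\<^sub>m n) x = mat 1 1 (\<lambda>(i,j). x i \<bullet> x j)"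
    using construct[OF xc indep IG] by auto
  have "gram 1 (1\<^sub>m n) x = 0\<^sub>m 1 1" unfolding gr using dot by (intro eq_matI) auto
  then show ?thesis using st by blast
qed

lemma sum_only0: fixes m :: nat assumes "\<And>j. 1 \<le> j \<Longrightarrow> j < m \<Longrightarrow> c j = 0" "0 < m"
  shows "(\<Sum>j<m. c j) = (c 0 :: 'a::comm_monoid_add)"
proof -
  have "(\<Sum>j<m. c j) = (\<Sum>j<m. if j = 0 then c j else 0)"
  proof (intro sum.cong refl)
    fix j assume "j \<in> {..<m}"
    then show "c j = (if j = 0 then c j else 0)" using assms(1)[of j] by (cases "j = 0") (auto simp: Suc_le_eq)
  qed
  also have "\<dots> = c 0" using assms(2) by (simp add: sum.delta)
  finally show ?thesis .
qed

lemma constrB: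
  assumes m2: "2 \<le> m" and rn: "2*m \<le> n"
  shows "\<exists>x. setting n (2*m) (1\<^sub>m n) (1\<^sub>m n + sum_outer n (2*m) x) x \<and>
           (\<forall>i<2*m. gram (2*m) (1\<^sub>m n) x $$ (i,i) = 1) \<and> gram (2*m) (1\<^sub>m n) x $$ (m, m+1) = 0"
proof -
  define r where "r = 2*m"
  define S where "S = (\<lambda>i. if i = 0 then {0, m, m+1} else if i < m then {0, i, m+i} else {i})"
  define x where "x = (\<lambda>i. ind n (S i))"
  have Ssub: "\<forall>j<r. S j \<subseteq> {..<n}"
  proof (intro allI impI)
    fix j assume j: "j < r"
    show "S j \<subseteq> {..<n}" using j rn m2 unfolding S_def r_def by auto
  qed
  have xc: "\<And>i. i < r \<Longrightarrow> x i \<in> carrier_vec n" unfolding x_def by simp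
  have s0: "{j. j < r \<and> 0 \<in> S j} = {..<m}" using m2 unfolding S_def r_def by auto
  have s1: "{j. j < r \<and> k \<in> S j} = {k}" if "1 \<le> k" "k < m" for k
    using that m2 unfolding S_def r_def by auto
  have s2: "{j. j < r \<and> m \<in> S j} = {0, m}" using m2 unfolding S_def r_def by auto
  have s3: "{j. j < r \<and> m+1 \<in> S j} = {0, 1, m+1}" using m2 unfolding S_def r_def by auto
  have s4: "{j. j < r \<and> m+t \<in> S j} = {t, m+t}" if "2 \<le> t" "t < m" for t
    using that m2 unfolding S_def r_def by auto
  have W0: "Wf r S c 0 = (\<Sum>j<m. c j)" for c unfolding Wf_set s0 by simp
  have W1: "Wf r S c k = c k" if "1 \<le> k" "k < m" for k c unfolding Wf_set s1[OF that] by simp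
  have W2: "Wf r S c m = c 0 + c m" for c unfolding Wf_set s2 using m2 by simp
  have W3: "Wf r S c (m+1) = c 0 + c 1 + c (m+1)" for c
    unfolding Wf_set s3 using m2 by (simp add: add.assoc)
  have W4: "Wf r S c (m+t) = c t + c (m+t)" if "2 \<le> t" "t < m" for t c
    unfolding Wf_set s4[OF that] using that by simp
  have cases_r: "i = 0 \<or> (1 \<le> i \<and> i < m) \<or> i = m \<or> i = m+1 \<or> (\<exists>t. 2 \<le> t \<and> t < m \<and> i = m+t)"
    if "i < r" for i
  proof -
    consider "i = 0" | "1 \<le> i \<and> i < m" | "i = m" | "i = m+1" | "m+2 \<le> i" by linarith
    then show ?thesis
    proof cases
      case 5
      then have "2 \<le> i - m" "i - m < m" "i = m + (i - m)" using that unfolding r_def by auto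
      then show ?thesis by blast
    qed auto
  qed
  have indep: "indepF n {..<r} (\<lambda>i j. x i $ j)" unfolding indepF_def
  proof (intro allI impI)
    fix c assume h: "\<forall>j<n. (\<Sum>i\<in>{..<r}. c i * x i $ j) = 0"
    have Wz: "Wf r S c k = 0" if "k < n" for k
      using h that ind_sum[where k=k and n=n and r=r and c=c and S=S] unfolding x_def by simp
    have a: "c k = 0" if "1 \<le> k" "k < m" for k using Wz[of k] W1[OF that] that rn by simp
    have c0: "c 0 = 0" using Wz[of 0] W0[of c] sum_only0[of m c] a m2 rn by simp
    have cm: "c m = 0" using Wz[of m] W2[of c] c0 m2 rn by simp
    have cm1: "c (m+1) = 0" using Wz[of "m+1"] W3[of c] c0 a[of 1] m2 rn by simp
    have cmt: "c (m+t) = 0" if "2 \<le> t" "t < m" for t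
      using Wz[of "m+t"] W4[OF that] a[of t] that rn by simp
    show "\<forall>i\<in>{..<r}. c i = 0"
    proof
      fix i assume "i \<in> {..<r}"
      then have "i < r" by simp
      then show "c i = 0" using cases_r a c0 cm cm1 cmt by blast
    qed
  qed
  have IG: "\<forall>i<r. c i = 0" if h: "\<forall>i<r. c i + (\<Sum>j<r. (x i \<bullet> x j) * c j) = 0" for c
  proof -
    have E: "c i + (\<Sum>k\<in>S i. Wf r S c k) = 0" if "i < r" for i
    proof -
      have e: "(\<Sum>j<r. (x i \<bullet> x j) * c j) = (\<Sum>k\<in>S i. Wf r S c k)"
        unfolding x_def by (rule ind_G[OF Ssub that])
      have "c i + (\<Sum>j<r. (x i \<bullet> x j) * c j) = 0" using h that by blast
      then show ?thesis unfolding e .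
    qed
    have Sm: "S m = {m}" "S (m+1) = {m+1}" using m2 unfolding S_def by auto
    have c0: "c 0 = 0"
    proof -
      have "c m + (c 0 + c m) = 0" using E[of m] Sm W2[of c] m2 unfolding r_def by simp
      then show ?thesis by (simp add: ac_simps)
    qed
    have c1: "c 1 = 0"
    proof -
      have "c (m+1) + (c 0 + c 1 + c (m+1)) = 0" using E[of "m+1"] Sm W3[of c] m2 unfolding r_def by simp
      then show ?thesis using c0 by (simp add: ac_simps)
    qed
    have ct: "c t = 0" if "2 \<le> t" "t < m" for t
    proof -
      have "S (m+t) = {m+t}" using that unfolding S_def by auto
      then have "c (m+t) + (c t + c (m+t)) = 0" using E[of "m+t"] W4[OF that] that unfolding r_def by simp
      then show ?thesis by (simp add: ac_simps)
    qed
    have call: "c t = 0" if "t < m" for t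
      using that c0 c1 ct by (cases "t = 0"; cases "t = 1") auto
    have W0z: "Wf r S c 0 = 0" using W0[of c] call by simp
    have cm1: "c (m+1) = 0"
    proof -
      have S1: "S 1 = {0, 1, m+1}" using m2 unfolding S_def by auto
      have "(\<Sum>k\<in>S 1. Wf r S c k) = Wf r S c 0 + Wf r S c 1 + Wf r S c (m+1)"
        unfolding S1 using m2 by (simp add: ac_simps)
      then have "c 1 + (Wf r S c 0 + Wf r S c 1 + Wf r S c (m+1)) = 0" using E[of 1] m2 unfolding r_def by simp
      then show ?thesis using W0z W1[of 1 c] W3[of c] c0 c1 m2 by simp
    qed
    have cmt: "c (m+t) = 0" if "2 \<le> t" "t < m" for t
    proof -
      have St: "S t = {0, t, m+t}" using that unfolding S_def by auto
      have "(\<Sum>k\<in>S t. Wf r S c k) = Wf r S c 0 + Wf r S c t + Wf r S c (m+t)"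
        unfolding St using that by (simp add: ac_simps)
      then have "c t + (Wf r S c 0 + Wf r S c t + Wf r S c (m+t)) = 0" using E[of t] that unfolding r_def by simp
      then show ?thesis using W0z W1[of t c] W4[OF that, of c] call that by simp
    qed
    have cm: "c m = 0"
    proof -
      have S0: "S 0 = {0, m, m+1}" unfolding S_def by simp
      have "(\<Sum>k\<in>S 0. Wf r S c k) = Wf r S c 0 + Wf r S c m + Wf r S c (m+1)"
        unfolding S0 using m2 by (simp add: ac_simps)
      then have "c 0 + (Wf r S c 0 + Wf r S c m + Wf r S c (m+1)) = 0" using E[of 0] m2 unfolding r_def by simp
      then show ?thesis using W0z W2[of c] W3[of c] c0 c1 cm1 by simp
    qed
    show ?thesis
    proof (intro allI impI)
      fix i assume "i < r"
      then show "c i = 0" using cases_r call c0 cm cm1 cmt by blast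
    qed
  qed
  have st: "setting n r (1\<^sub>m n) (1\<^sub>m n + sum_outer n r x) x"
    and gr: "gram r (1\<^sub>m n) x = mat r r (\<lambda>(i,j). x i \<bullet> x j)"
    using construct[OF xc indep IG] by auto
  have diag: "gram r (1\<^sub>m n) x $$ (i,i) = 1" if i: "i < r" for i
  proof -
    have "gram r (1\<^sub>m n) x $$ (i,i) = x i \<bullet> x i" using gr i by simp
    also have "\<dots> = of_nat (card (S i \<inter> S i))" unfolding x_def
      using Ssub i by (intro ind_dot) auto
    also have "card (S i \<inter> S i) = (if i < m then 3 else 1)" using m2 unfolding S_def by auto
    finally show ?thesis by (simp add: of_nat_bit)
  qed
  have off: "gram r (1\<^sub>m n) x $$ (m, m+1) = 0"
  proof -
    have mr: "m < r" "m + 1 < r" using m2 unfolding r_def by auto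
    have "gram r (1\<^sub>m n) x $$ (m, m+1) = x m \<bullet> x (m+1)" using gr mr by simp
    also have "\<dots> = of_nat (card (S m \<inter> S (m+1)))" unfolding x_def
      using Ssub mr by (intro ind_dot) auto
    also have "S m \<inter> S (m+1) = {}" using m2 unfolding S_def by auto
    finally show ?thesis by simp
  qed
  show ?thesis using st diag off unfolding r_def by blast
qed

lemma gram_carrier: "gram r A x \<in> carrier_mat r r" unfolding gram_def by simp

lemma gram_sym: assumes st: "setting n r A B x" and ij: "i < r" "j < r"
  shows "gram r A x $$ (i,j) = gram r A x $$ (j,i)"
proof -
  note b = setting_basic[OF st]
  define M where "M = minv A"
  have Ms: "M $$ (k,l) = M $$ (l,k)" if "k < n" "l < n" for k l
  proof -
    have "transpose_mat M $$ (l,k) = M $$ (k,l)" using b(6) that M_def by simp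
    then show ?thesis using b(9) M_def by simp
  qed
  have "gram r A x $$ (i,j) = (\<Sum>k<n. x i $ k * (\<Sum>l<n. M $$ (k,l) * x j $ l))"
    unfolding M_def by (rule gram_formula[where i=i and j=j and x=x, OF ij b(6) b(10)[OF ij(2)]])
  also have "\<dots> = (\<Sum>k<n. \<Sum>l<n. x i $ k * (M $$ (k,l) * x j $ l))" by (simp add: sum_distrib_left)
  also have "\<dots> = (\<Sum>l<n. \<Sum>k<n. x i $ k * (M $$ (k,l) * x j $ l))" by (rule sum.swap)
  also have "\<dots> = (\<Sum>l<n. \<Sum>k<n. x j $ l * (M $$ (l,k) * x i $ k))"
    using Ms by (intro sum.cong refl) (simp add: mult_ac)
  also have "\<dots> = (\<Sum>l<n. x j $ l * (\<Sum>k<n. M $$ (l,k) * x i $ k))" by (simp add: sum_distrib_left)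
  also have "\<dots> = gram r A x $$ (j,i)"
    unfolding M_def by (rule gram_formula[where i=j and j=i and x=x, symmetric, OF ij(2,1) b(6) b(10)[OF ij(1)]])
  finally show ?thesis .
qed

lemma sum_ones_bit: "(\<Sum>j<(r::nat). (1::bit)) = (if even r then 0 else 1)"
proof -
  have "(\<Sum>j<r. (1::bit)) = of_nat r" by simp
  then show ?thesis by (simp add: of_nat_bit)
qed

theorem lemma7p1:
  fixes n r :: nat
  assumes "n \<ge> 2" and "r \<ge> 1"
  shows
    "((\<exists>A B x. setting n r A B x \<and> (\<forall>i<r. \<forall>j<r. gram r A x $$ (i, j) = 1))
        \<longleftrightarrow> even r \<and> r \<le> (n + 1) div 2)
   \<and> ((\<exists>A B x. setting n r A B x \<and> (\<forall>i<r. gram r A x $$ (i, i) = 1)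
          \<and> (\<exists>i<r. \<exists>j<r. gram r A x $$ (i, j) = 0))
        \<longleftrightarrow> r \<in> {1..n} - {2} \<and> even r)
   \<and> ((\<exists>A B x. setting n r A B x \<and> vec_space.rank r (gram r A x) = 1
          \<and> mtrace (gram r A x) = 0)
        \<longleftrightarrow> r \<in> {2..(n + 1) div 2})
   \<and> (\<forall>s\<in>{1..n}. \<exists>A B x. setting n s A B x
          \<and> \<not> (\<forall>i<s. gram s A x $$ (i, i) = 1)
          \<and> \<not> (vec_space.rank s (gram s A x) = 1 \<and> mtrace (gram s A x) = 0))"
proof (intro conjI)
  have n2: "2 \<le> n" and r1: "1 \<le> r" using assms by auto
  show "(\<exists>A B x. setting n r A B x \<and> (\<forall>i<r. \<forall>j<r. gram r A x $$ (i, j) = 1))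
        \<longleftrightarrow> even r \<and> r \<le> (n + 1) div 2"
  proof
    assume "\<exists>A B x. setting n r A B x \<and> (\<forall>i<r. \<forall>j<r. gram r A x $$ (i, j) = 1)"
    then obtain A B x where st: "setting n r A B x" and G: "\<forall>i<r. \<forall>j<r. gram r A x $$ (i, j) = 1"
      by blast
    have ev: "even r"
    proof (rule ccontr)
      assume od: "odd r"
      have "\<forall>i<r. (\<lambda>_. 1::bit) i + (\<Sum>j<r. gram r A x $$ (i,j) * (\<lambda>_. 1::bit) j) = 0"
      proof (intro allI impI)
        fix i assume i: "i < r"
        have "(\<Sum>j<r. gram r A x $$ (i,j) * (\<lambda>_. 1::bit) j) = (\<Sum>j<r. (1::bit))"
          using G i by (intro sum.cong) auto
        then show "(\<lambda>_. 1::bit) i + (\<Sum>j<r. gram r A x $$ (i,j) * (\<lambda>_. 1::bit) j) = 0"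
          using od by (simp add: sum_ones_bit of_nat_bit)
      qed
      from IG_inj[OF st this] r1 show False by auto
    qed
    have "2 * r \<le> n + 1"
      by (rule bound_rank1[OF st _ _, of 0 "\<lambda>_. 1"]) (use r1 G in auto)
    then show "even r \<and> r \<le> (n + 1) div 2" using ev by linarith
  next
    assume h: "even r \<and> r \<le> (n + 1) div 2"
    have rn: "2 * r \<le> n + 1" using h by linarith
    have us: "(\<Sum>i<r. (\<lambda>_. 1::bit) i) = 0" using h by (simp add: sum_ones_bit of_nat_bit)
    obtain x where "setting n r (1\<^sub>m n) (1\<^sub>m n + sum_outer n r x) x"
      "\<forall>i<r. \<forall>j<r. gram r (1\<^sub>m n) x $$ (i,j) = (\<lambda>_. 1::bit) i * (\<lambda>_. 1::bit) j"
      using constrA[OF r1 rn _ us] by auto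
    then show "\<exists>A B x. setting n r A B x \<and> (\<forall>i<r. \<forall>j<r. gram r A x $$ (i, j) = 1)" by auto
  qed
  show "(\<exists>A B x. setting n r A B x \<and> (\<forall>i<r. gram r A x $$ (i, i) = 1)
          \<and> (\<exists>i<r. \<exists>j<r. gram r A x $$ (i, j) = 0))
        \<longleftrightarrow> r \<in> {1..n} - {2} \<and> even r"
  proof
    assume "\<exists>A B x. setting n r A B x \<and> (\<forall>i<r. gram r A x $$ (i, i) = 1)
          \<and> (\<exists>i<r. \<exists>j<r. gram r A x $$ (i, j) = 0)"
    then obtain A B x i0 j0 where st: "setting n r A B x" and D: "\<forall>i<r. gram r A x $$ (i, i) = 1"
      and ij0: "i0 < r" "j0 < r" "gram r A x $$ (i0, j0) = 0" by blast
    let ?G = "gram r A x"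
    have rn: "r \<le> n" by (rule r_le_n[OF st])
    have ev: "even r"
    proof (rule ccontr)
      assume od: "odd r"
      define K where "K = mat r r (\<lambda>(i,j). of_bool (i = j) + ?G $$ (i,j))"
      have Kc: "K \<in> carrier_mat r r" unfolding K_def by simp
      have "det K = 0"
        by (rule alt_det0[OF Kc od]) (use D gram_sym[OF st] in \<open>auto simp: K_def\<close>)
      then obtain v where v: "v \<in> carrier_vec r" "v \<noteq> 0\<^sub>v r" "K *\<^sub>v v = 0\<^sub>v r"
        using det_0_iff_vec_prod_zero_field[OF Kc] by blast
      have "\<forall>i<r. v $ i + (\<Sum>j<r. ?G $$ (i,j) * v $ j) = 0"
      proof (intro allI impI)
        fix i assume i: "i < r"
        have "(K *\<^sub>v v) $ i = (\<Sum>j<r. K $$ (i,j) * v $ j)" by (rule mv_index[OF Kc v(1) i])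
        also have "\<dots> = (\<Sum>j<r. of_bool (i = j) * v $ j) + (\<Sum>j<r. ?G $$ (i,j) * v $ j)"
          unfolding K_def using i by (simp add: distrib_right sum.distrib)
        also have "(\<Sum>j<r. of_bool (i = j) * v $ j) = v $ i"
        proof -
          have "(\<Sum>j<r. of_bool (i = j) * v $ j) = (\<Sum>j<r. if j = i then v $ j else 0)"
            by (intro sum.cong) auto
          also have "\<dots> = v $ i" using i by (simp add: sum.delta)
          finally show ?thesis .
        qed
        finally show "v $ i + (\<Sum>j<r. ?G $$ (i,j) * v $ j) = 0" using v(3) i by simp
      qed
      from IG_inj[OF st this] have "\<forall>i<r. v $ i = 0" .
      then have "v = 0\<^sub>v r" using v(1) by (intro eq_vecI) auto
      then show False using v(2) by simp
    qed
    have r2: "r \<noteq> 2"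
    proof
      assume r2: "r = 2"
      have ne: "i0 \<noteq> j0" using D ij0 by auto
      have off: "?G $$ (0,1) = 0" "?G $$ (1,0) = 0"
      proof -
        have "(i0 = 0 \<and> j0 = 1) \<or> (i0 = 1 \<and> j0 = 0)" using ne ij0 r2 by auto
        then have "?G $$ (0,1) = 0 \<or> ?G $$ (1,0) = 0" using ij0 by auto
        moreover have "?G $$ (0,1) = ?G $$ (1,0)" using gram_sym[OF st, of 0 1] r2 by simp
        ultimately show "?G $$ (0,1) = 0" "?G $$ (1,0) = 0" by auto
      qed
      define c :: "nat \<Rightarrow> bit" where "c = (\<lambda>i. of_bool (i = 0))"
      have "\<forall>i<r. c i + (\<Sum>j<r. ?G $$ (i,j) * c j) = 0"
      proof (intro allI impI)
        fix i assume i: "i < r"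
        have s2: "(\<Sum>j<r. ?G $$ (i,j) * c j) = ?G $$ (i,0) * c 0 + ?G $$ (i,1) * c 1"
          unfolding r2 by (simp add: numeral_2_eq_2)
        have "i = 0 \<or> i = 1" using i r2 by auto
        then show "c i + (\<Sum>j<r. ?G $$ (i,j) * c j) = 0"
          unfolding s2 using D off r2 by (auto simp: c_def)
      qed
      from IG_inj[OF st this] r2 have "c 0 = 0" by auto
      then show False unfolding c_def by simp
    qed
    show "r \<in> {1..n} - {2} \<and> even r" using r1 rn r2 ev by auto
  next
    assume h: "r \<in> {1..n} - {2} \<and> even r"
    define m where "m = r div 2"
    have rm: "r = 2 * m" using h m_def by auto
    have m2: "2 \<le> m" using h rm by auto
    have mn: "2 * m \<le> n" using h rm by auto
    obtain x where st: "setting n (2*m) (1\<^sub>m n) (1\<^sub>m n + sum_outer n (2*m) x) x"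
      and D: "\<forall>i<2*m. gram (2*m) (1\<^sub>m n) x $$ (i,i) = 1"
      and O: "gram (2*m) (1\<^sub>m n) x $$ (m, m+1) = 0"
      using constrB[OF m2 mn] by blast
    have "m < 2*m" "m + 1 < 2*m" using m2 by auto
    then show "\<exists>A B x. setting n r A B x \<and> (\<forall>i<r. gram r A x $$ (i, i) = 1)
          \<and> (\<exists>i<r. \<exists>j<r. gram r A x $$ (i, j) = 0)"
      using st D O unfolding rm by blast
  qed
  show "(\<exists>A B x. setting n r A B x \<and> vec_space.rank r (gram r A x) = 1
          \<and> mtrace (gram r A x) = 0)
        \<longleftrightarrow> r \<in> {2..(n + 1) div 2}"
  proof
    assume "\<exists>A B x. setting n r A B x \<and> vec_space.rank r (gram r A x) = 1
          \<and> mtrace (gram r A x) = 0"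
    then obtain A B x where st: "setting n r A B x" and rk: "vec_space.rank r (gram r A x) = 1"
      and tr: "mtrace (gram r A x) = 0" by blast
    let ?G = "gram r A x"
    have sym: "\<forall>i<r. \<forall>j<r. ?G $$ (i,j) = ?G $$ (j,i)" using gram_sym[OF st] by blast
    note R = rank1_struct[OF gram_carrier sym rk]
    obtain p where p: "p < r" "?G $$ (p,p) = 1" using R(2) by blast
    have "2 * r \<le> n + 1"
      by (rule bound_rank1[OF st p(1) _ R(1)]) (rule p(2))
    moreover have "r \<noteq> 1"
    proof
      assume "r = 1"
      then have "mtrace ?G = ?G $$ (0,0)" unfolding mtrace_def using gram_carrier[of r A x] by simp
      moreover have "p = 0" using p \<open>r = 1\<close> by simp
      ultimately show False using tr p by simp
    qed
    ultimately show "r \<in> {2..(n + 1) div 2}" using r1 by auto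
  next
    assume h: "r \<in> {2..(n + 1) div 2}"
    have r2: "2 \<le> r" and rn: "2 * r \<le> n + 1" using h by auto
    define u :: "nat \<Rightarrow> bit" where "u = (\<lambda>i. of_bool (i < 2 * (r div 2)))"
    have u0: "u 0 = 1" using r2 unfolding u_def by auto
    have us: "(\<Sum>i<r. u i) = 0"
    proof -
      have "(\<Sum>i<r. u i) = of_nat (card ({..<r} \<inter> {i. i < 2 * (r div 2)}))" unfolding u_def by simp
      also have "{..<r} \<inter> {i. i < 2 * (r div 2)} = {..<2 * (r div 2)}" by auto
      finally show ?thesis by (simp add: of_nat_bit)
    qed
    obtain x where st: "setting n r (1\<^sub>m n) (1\<^sub>m n + sum_outer n r x) x"
      and G: "\<forall>i<r. \<forall>j<r. gram r (1\<^sub>m n) x $$ (i,j) = u i * u j"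
      using constrA[OF r1 rn u0 us] by blast
    have rk: "vec_space.rank r (gram r (1\<^sub>m n) x) = 1"
      by (rule rank_eq1[OF gram_carrier G _ u0]) (use r2 in auto)
    have "mtrace (gram r (1\<^sub>m n) x) = (\<Sum>i<r. u i * u i)"
      unfolding mtrace_def using gram_carrier[of r "1\<^sub>m n" x] G by (intro sum.cong) auto
    also have "\<dots> = 0" using us by simp
    finally show "\<exists>A B x. setting n r A B x \<and> vec_space.rank r (gram r A x) = 1
          \<and> mtrace (gram r A x) = 0" using st rk by blast
  qed
  show "\<forall>s\<in>{1..n}. \<exists>A B x. setting n s A B x
          \<and> \<not> (\<forall>i<s. gram s A x $$ (i, i) = 1)
          \<and> \<not> (vec_space.rank s (gram s A x) = 1 \<and> mtrace (gram s A x) = 0)"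
  proof
    fix s assume s: "s \<in> {1..n}"
    show "\<exists>A B x. setting n s A B x
          \<and> \<not> (\<forall>i<s. gram s A x $$ (i, i) = 1)
          \<and> \<not> (vec_space.rank s (gram s A x) = 1 \<and> mtrace (gram s A x) = 0)"
    proof (cases "s = 1")
      case True
      obtain x where st: "setting n 1 (1\<^sub>m n) (1\<^sub>m n + sum_outer n 1 x) x"
        and G: "gram 1 (1\<^sub>m n) x = 0\<^sub>m 1 1" using constrD[OF n2] by blast
      have rk: "vec_space.rank 1 (gram 1 (1\<^sub>m n) x) = 0" unfolding G by (rule vec_space.rank_0I)
      have d: "gram 1 (1\<^sub>m n) x $$ (0,0) = 0" unfolding G by simp
      show ?thesis unfolding True using st rk d by force
    next
      case False
      define m where "m = s div 2"
      define od where "od = odd s"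
      have m1: "1 \<le> m" using s False m_def by auto
      have sm: "s = 2*m + (if od then 1 else 0)" using m_def od_def by auto
      have sn: "s \<le> n" using s by auto
      obtain x where st: "setting n s (1\<^sub>m n) (1\<^sub>m n + sum_outer n s x) x"
        and g00: "gram s (1\<^sub>m n) x $$ (0,0) = 0" and g0m: "gram s (1\<^sub>m n) x $$ (0,m) = 1"
        using constrC[OF m1 sm sn] by blast
      have ms: "0 < s" "m < s" using sm m1 by auto
      have nd: "\<not> (\<forall>i<s. gram s (1\<^sub>m n) x $$ (i, i) = 1)"
      proof
        assume "\<forall>i<s. gram s (1\<^sub>m n) x $$ (i, i) = 1"
        then have "gram s (1\<^sub>m n) x $$ (0, 0) = 1" using ms(1) by blast
        then show False using g00 by simp
      qed
      have nr: "vec_space.rank s (gram s (1\<^sub>m n) x) \<noteq> 1"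
      proof
        assume rk: "vec_space.rank s (gram s (1\<^sub>m n) x) = 1"
        have sym: "\<forall>i<s. \<forall>j<s. gram s (1\<^sub>m n) x $$ (i,j) = gram s (1\<^sub>m n) x $$ (j,i)"
          using gram_sym[OF st] by blast
        have "gram s (1\<^sub>m n) x $$ (0,m) = gram s (1\<^sub>m n) x $$ (0,0) * gram s (1\<^sub>m n) x $$ (m,m)"
          using rank1_struct(1)[OF gram_carrier sym rk] ms by blast
        then show False using g00 g0m by simp
      qed
      show ?thesis using st nd nr by blast
    qed
  qed
qed

end
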